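(* Consider the following family of Block MDPs with horizon $H$ and actions $\{0,1\}$. The policy class $\Pi$ consists of all open-loop policies $\pi\leftrightarrow(a_1,\dots,a_H)\in\{0,1\}^H$. For $\pi^\star\in\Pi$ and $\phi\in\Phi$, the MDP $M_{\pi^\star,\phi}$ has latent states $\mathcal{S}_h=\{g_h,b_h,d_h\}$, initial latent state $g_1$, latent transitions $g_h\to g_{h+1}$ if $a=\pi^\star_h$, $d_h\to d_{h+1}$ if $a=\pi^\star_h$, and every other pair $\to b_{h+1}$; rewards are zero except at layer $H$, where the reward is $1$ at $(g_H,\pi^\star_H)$, $1$ at $(d_H,a)$ for $a\ne\pi^\star_H$, $\mathrm{Ber}(1/2)$ at $(b_H,a)$ for any $a$, and $0$ otherwise. The observation space is $\mathcal{X}_h=\{x_h^{(1)},\dots,x_h^{(m)}\}$ with $m=2^{H+2}$; $\Phi$ is the set of decoders with $\phi(x)=g_1$ for all $x\in\mathcal{X}_1$ and, for each $h\ge2$, disjoint sets of exactly $2^H$ observations of $\mathcal{X}_h$ mapped to $g_h$ and to $d_h$ and the rest mapped to $b_h$; the emission is $\psi(s)=\mathrm{Unif}\{x:\phi(x)=s\}$. The reset distribution is $\mu_h=\mathrm{Unif}(\mathcal{X}_h)$. Let $\Theta_0=\{(\pi^\star,\phi):\pi^\star_H=0\}$, $\Theta_1=\{(\pi^\star,\phi):\pi^\star_H=1\}$. Then for any deterministic algorithm $\mathsf{Alg}$ that adaptively collects $T=2^{O(H)}$ samples via $\mu$-reset access, $$D_{\mathrm{TV}}\big(\Pr^{\m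athrm{Unif}(\Theta_0),\mathsf{Alg}},\Pr^{\mathrm{Unif}(\Theta_1),\mathsf{Alg}}\big)\le\frac{T^4H}{2^{H-10}}.$$
   Context: $\mu$-reset access: in each episode (one sample) the learner either starts from $x_1\sim\psi(g_1)$ or chooses a layer $h\ge2$ and starts from $x_h\sim\mu_h$, then chooses actions until layer $H$, observing the visited observations and rewards. $\mathsf{Alg}$ is deterministic: its choice of starting layer, each action and its final output policy are deterministic functions of previously observed data. For $\nu\in\Delta(\Theta)$ with $\Theta=\Pi\times\Phi$, $\Pr^{\nu,\mathsf{Alg}}$ is the joint law of all observed data and the returned policy when $\theta\sim\nu$ is drawn and $\mathsf{Alg}$ interacts with $M_\theta$. $D_{\mathrm{TV}}$ is total variation distance. *)

theory Defs
  imports "HOL-Probability.Probability"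
begin

datatype lat = Gs | Bs | Ds

text \<open>Conventions: layers are 1..H; actions are bool (False = 0, True = 1);
  an open-loop policy is a bool list of length H whose (h-1)-th entry is the action at layer h;
  observations of layer h are x_h^(i), represented by the index i-1 in {0..<m}; rewards lie in
  {0,1} and are represented by bool (True = 1).\<close>

definition nobs :: "nat \<Rightarrow> nat" where
  "nobs H = 2 ^ (H + 2)"

definition Pi_set :: "nat \<Rightarrow> bool list set" where
  "Pi_set H = {\<pi>. length \<pi> = H}"

text \<open>Decoders phi h x (layer h, observation index x); canonically Bs outside the relevant domain.\<close>
definition Phi_set :: "nat \<Rightarrow> (nat \<Rightarrow> nat \<Rightarrow> lat) set" where
  "Phi_set H = {\<phi>. (\<forall>h x. (h = 0 \<or> H < h \<or> nobs H \<le> x) \<longrightarrow> \<phi> h x = Bs)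
     \<and> (\<forall>x < nobs H. \<phi> 1 x = Gs)
     \<and> (\<forall>h. 2 \<le> h \<and> h \<le> H \<longrightarrow>
          card {x. x < nobs H \<and> \<phi> h x = Gs} = 2 ^ H \<and>
          card {x. x < nobs H \<and> \<phi> h x = Ds} = 2 ^ H)}"

type_synonym theta = "bool list \<times> (nat \<Rightarrow> nat \<Rightarrow> lat)"

definition Theta0 :: "nat \<Rightarrow> theta set" where
  "Theta0 H = {(\<pi>, \<phi>). \<pi> \<in> Pi_set H \<and> \<phi> \<in> Phi_set H \<and> \<pi> ! (H - 1) = False}"

definition Theta1 :: "nat \<Rightarrow> theta set" where
  "Theta1 H = {(\<pi>, \<phi>). \<pi> \<in> Pi_set H \<and> \<phi> \<in> Phi_set H \<and> \<pi> ! (H - 1) = True}"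

definition next_lat :: "bool list \<Rightarrow> nat \<Rightarrow> lat \<Rightarrow> bool \<Rightarrow> lat" where
  "next_lat \<pi> h s a = (case s of
       Gs \<Rightarrow> (if a = \<pi> ! (h - 1) then Gs else Bs)
     | Ds \<Rightarrow> (if a = \<pi> ! (h - 1) then Ds else Bs)
     | Bs \<Rightarrow> Bs)"

definition reward_pmf :: "nat \<Rightarrow> bool list \<Rightarrow> nat \<Rightarrow> lat \<Rightarrow> bool \<Rightarrow> bool pmf" where
  "reward_pmf H \<pi> h s a = (if h < H then return_pmf False else (case s of
       Gs \<Rightarrow> return_pmf (a = \<pi> ! (H - 1))
     | Ds \<Rightarrow> return_pmf (a \<noteq> \<pi> ! (H - 1))
     | Bs \<Rightarrow> bernoulli_pmf (1/2)))"

definition emit :: "nat \<Rightarrow> (nat \<Rightarrow> nat \<Rightarrow> lat) \<Rightarrow> nat \<Rightarrow> lat \<Rightarrow> nat pmf" where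
  "emit H \<phi> h s = pmf_of_set {x. x < nobs H \<and> \<phi> h x = s}"

definition reset :: "nat \<Rightarrow> nat pmf" where
  "reset H = pmf_of_set {..< nobs H}"

text \<open>One observed step: (observation, action, reward).\<close>
type_synonym step = "nat \<times> bool \<times> bool"
text \<open>An episode: (starting layer, observed steps from the starting layer up to layer H).\<close>
type_synonym episode = "nat \<times> step list"

text \<open>Roll out an episode from layer h with current observation x (latent = phi h x, the
  block structure), steps observed so far ps; act maps (steps so far, current obs) to an action.
  The first argument is fuel (number of remaining layers).\<close>
primrec gen :: "nat \<Rightarrow> nat \<Rightarrow> theta \<Rightarrow> (step list \<Rightarrow> nat \<Rightarrow> bool) \<Rightarrow> nat \<Rightarrow> nat
    \<Rightarrow> step list \<Rightarrow> step list pmf" where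
  "gen 0 H \<theta> act h x ps = return_pmf ps"
| "gen (Suc n) H \<theta> act h x ps =
     (let s = snd \<theta> h x; a = act ps x in
      bind_pmf (reward_pmf H (fst \<theta>) h s a) (\<lambda>r.
        let ps' = ps @ [(x, a, r)] in
        if H \<le> h then return_pmf ps'
        else bind_pmf (emit H (snd \<theta>) (Suc h) (next_lat (fst \<theta>) h s a))
               (\<lambda>x'. gen n H \<theta> act (Suc h) x' ps')))"

text \<open>One episode under mu-reset access: the deterministic algorithm chooses the start layer
  st hist (1 = start from psi(g_1); h >= 2 = start from mu_h) and actions act hist.\<close>
definition episode :: "nat \<Rightarrow> theta \<Rightarrow> (episode list \<Rightarrow> nat)
    \<Rightarrow> (episode list \<Rightarrow> step list \<Rightarrow> nat \<Rightarrow> bool) \<Rightarrow> episode list \<Rightarrow> episode pmf" where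
  "episode H \<theta> st act hist =
     (let h0 = st hist in
      bind_pmf (if h0 = 1 then emit H (snd \<theta>) 1 Gs else reset H) (\<lambda>x.
        map_pmf (\<lambda>ps. (h0, ps)) (gen (H + 1 - h0) H \<theta> (act hist) h0 x [])))"

primrec run :: "nat \<Rightarrow> theta \<Rightarrow> (episode list \<Rightarrow> nat)
    \<Rightarrow> (episode list \<Rightarrow> step list \<Rightarrow> nat \<Rightarrow> bool) \<Rightarrow> nat \<Rightarrow> episode list \<Rightarrow> episode list pmf" where
  "run H \<theta> st act 0 hist = return_pmf hist"
| "run H \<theta> st act (Suc n) hist =
     bind_pmf (episode H \<theta> st act hist) (\<lambda>e. run H \<theta> st act n (hist @ [e]))"

definition law :: "nat \<Rightarrow> theta \<Rightarrow> (episode list \<Rightarrow> nat)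
    \<Rightarrow> (episode list \<Rightarrow> step list \<Rightarrow> nat \<Rightarrow> bool) \<Rightarrow> (episode list \<Rightarrow> bool list) \<Rightarrow> nat
    \<Rightarrow> (episode list \<times> bool list) pmf" where
  "law H \<theta> st act out T = map_pmf (\<lambda>hs. (hs, out hs)) (run H \<theta> st act T [])"

definition mix_law :: "nat \<Rightarrow> theta set \<Rightarrow> (episode list \<Rightarrow> nat)
    \<Rightarrow> (episode list \<Rightarrow> step list \<Rightarrow> nat \<Rightarrow> bool) \<Rightarrow> (episode list \<Rightarrow> bool list) \<Rightarrow> nat
    \<Rightarrow> (episode list \<times> bool list) pmf" where
  "mix_law H \<Theta> st act out T = bind_pmf (pmf_of_set \<Theta>) (\<lambda>\<theta>. law H \<theta> st act out T)"

definition D_TV :: "'a pmf \<Rightarrow> 'a pmf \<Rightarrow> real" where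
  "D_TV p q = (SUP A. \<bar>measure_pmf.prob p A - measure_pmf.prob q A\<bar>)"

end

theory Submission
  imports Defs
begin


definition Kc :: "nat \<Rightarrow> lat \<Rightarrow> real" where
  "Kc H l = (case l of Bs \<Rightarrow> 2 ^ (H + 1) | _ \<Rightarrow> 2 ^ H)"

definition pl :: "nat \<Rightarrow> lat \<Rightarrow> real" where
  "pl H l = Kc H l / real (nobs H)"

definition rf :: "nat \<Rightarrow> bool list \<Rightarrow> nat \<Rightarrow> lat \<Rightarrow> bool \<Rightarrow> bool \<Rightarrow> real" where
  "rf H \<pi> h l a r = (if h < H then 1 else 2 * pmf (reward_pmf H \<pi> h l a) r)"

definition tf :: "nat \<Rightarrow> bool list \<Rightarrow> nat \<Rightarrow> lat \<Rightarrow> bool \<Rightarrow> lat \<Rightarrow> real" where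
  "tf H \<pi> h l a l' = (if l' = next_lat \<pi> h l a then real (nobs H) / Kc H l' else 0)"

fun Rw :: "nat \<Rightarrow> theta \<Rightarrow> nat \<Rightarrow> step list \<Rightarrow> real" where
  "Rw H \<theta> h [] = 1"
| "Rw H \<theta> h [(x,a,r)] = rf H (fst \<theta>) h (snd \<theta> h x) a r"
| "Rw H \<theta> h ((x,a,r)#(x',a',r')#rest) = rf H (fst \<theta>) h (snd \<theta> h x) a r
     * tf H (fst \<theta>) h (snd \<theta> h x) a (snd \<theta> (Suc h) x') * Rw H \<theta> (Suc h) ((x',a',r')#rest)"

fun V :: "nat \<Rightarrow> bool list \<Rightarrow> nat \<Rightarrow> lat \<Rightarrow> step list \<Rightarrow> real" where
  "V H \<pi> h l [] = 1"
| "V H \<pi> h l [(x,a,r)] = rf H \<pi> h l a r"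
| "V H \<pi> h l ((x,a,r)#s#rest) = rf H \<pi> h l a r * V H \<pi> (Suc h) (next_lat \<pi> h l a) (s#rest)"

primrec genQ :: "nat \<Rightarrow> nat \<Rightarrow> (step list \<Rightarrow> nat \<Rightarrow> bool) \<Rightarrow> nat \<Rightarrow> nat
    \<Rightarrow> step list \<Rightarrow> step list pmf" where
  "genQ 0 H act h x ps = return_pmf ps"
| "genQ (Suc n) H act h x ps =
     (let a = act ps x in
      bind_pmf (if h < H then return_pmf False else bernoulli_pmf (1/2)) (\<lambda>r.
        let ps' = ps @ [(x, a, r)] in
        if H \<le> h then return_pmf ps'
        else bind_pmf (pmf_of_set {..< nobs H}) (\<lambda>x'. genQ n H act (Suc h) x' ps')))"

definition episodeQ :: "nat \<Rightarrow> (episode list \<Rightarrow> nat)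
    \<Rightarrow> (episode list \<Rightarrow> step list \<Rightarrow> nat \<Rightarrow> bool) \<Rightarrow> episode list \<Rightarrow> episode pmf" where
  "episodeQ H st act hist =
     bind_pmf (pmf_of_set {..< nobs H}) (\<lambda>x.
        map_pmf (\<lambda>ps. (st hist, ps)) (genQ (H + 1 - st hist) H (act hist) (st hist) x []))"

primrec runQ :: "nat \<Rightarrow> (episode list \<Rightarrow> nat)
    \<Rightarrow> (episode list \<Rightarrow> step list \<Rightarrow> nat \<Rightarrow> bool) \<Rightarrow> nat \<Rightarrow> episode list \<Rightarrow> episode list pmf" where
  "runQ H st act 0 hist = return_pmf hist"
| "runQ H st act (Suc n) hist =
     bind_pmf (episodeQ H st act hist) (\<lambda>e. runQ H st act n (hist @ [e]))"

lemma nobs_pos: "0 < nobs H" by (simp add: nobs_def)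

lemma pmf_bind_collapse:
  assumes "\<And>z. z \<noteq> z0 \<Longrightarrow> pmf (f z) y = 0"
  shows "pmf (bind_pmf p f) y = pmf p z0 * pmf (f z0) y"
proof -
  have "pmf (bind_pmf p f) y = (\<integral>z. indicator {z0} z * pmf (f z0) y \<partial>p)"
    unfolding pmf_bind by (rule Bochner_Integration.integral_cong) (auto simp: assms indicator_def)
  also have "\<dots> = measure_pmf.prob p {z0} * pmf (f z0) y" by simp
  finally show ?thesis by (simp add: measure_pmf_single)
qed

lemma genQ_prefix:
  "ps \<in> set_pmf (genQ n H act h x ps0) \<Longrightarrow>
     \<exists>new. ps = ps0 @ new \<and> (0 < n \<longrightarrow> (\<exists>a r rest. new = (x,a,r)#rest))"
proof (induction n arbitrary: h x ps0)
  case 0 then show ?case by simp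
next
  case (Suc n)
  from Suc.prems obtain r where r: "ps \<in> set_pmf (let ps' = ps0 @ [(x, act ps0 x, r)] in
        if H \<le> h then return_pmf ps'
        else bind_pmf (pmf_of_set {..< nobs H}) (\<lambda>x'. genQ n H act (Suc h) x' ps'))"
    by (auto simp: Let_def)
  show ?case
  proof (cases "H \<le> h")
    case True then show ?thesis using r by auto
  next
    case False
    with r obtain x' where "ps \<in> set_pmf (genQ n H act (Suc h) x' (ps0 @ [(x, act ps0 x, r)]))"
      by (auto simp: Let_def)
    from Suc.IH[OF this] show ?thesis by auto
  qed
qed

lemma gen_prefix:
  "ps \<in> set_pmf (gen n H \<theta> act h x ps0) \<Longrightarrow>
     \<exists>new. ps = ps0 @ new \<and> (0 < n \<longrightarrow> (\<exists>a r rest. new = (x,a,r)#rest))"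
proof (induction n arbitrary: h x ps0)
  case 0 then show ?case by simp
next
  case (Suc n)
  from Suc.prems obtain r where r: "ps \<in> set_pmf (let ps' = ps0 @ [(x, act ps0 x, r)] in
        if H \<le> h then return_pmf ps'
        else bind_pmf (emit H (snd \<theta>) (Suc h) (next_lat (fst \<theta>) h (snd \<theta> h x) (act ps0 x)))
               (\<lambda>x'. gen n H \<theta> act (Suc h) x' ps'))"
    by (auto simp: Let_def)
  show ?case
  proof (cases "H \<le> h")
    case True then show ?thesis using r by auto
  next
    case False
    with r obtain x' where "ps \<in> set_pmf (gen n H \<theta> act (Suc h) x' (ps0 @ [(x, act ps0 x, r)]))"
      by (auto simp: Let_def)
    from Suc.IH[OF this] show ?thesis by auto
  qed
qed

lemma lat_UNIV: "(UNIV :: lat set) = {Gs, Bs, Ds}"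
  using lat.exhaust by auto

lemma finite_lat[simp]: "finite (UNIV :: lat set)"
  by (simp add: lat_UNIV)

lemma sum_lat: "(\<Sum>l\<in>UNIV. f l) = f Gs + f Bs + (f Ds :: real)"
  by (simp add: lat_UNIV)

lemma phi_layer1: "\<phi> \<in> Phi_set H \<Longrightarrow> x < nobs H \<Longrightarrow> \<phi> 1 x = Gs"
  by (simp add: Phi_set_def)

lemma phi_card:
  assumes "\<phi> \<in> Phi_set H" "2 \<le> h" "h \<le> H"
  shows "real (card {x. x < nobs H \<and> \<phi> h x = l}) = Kc H l"
proof -
  have G: "card {x. x < nobs H \<and> \<phi> h x = Gs} = 2^H" and D: "card {x. x < nobs H \<and> \<phi> h x = Ds} = 2^H"
    using assms by (auto simp: Phi_set_def)
  have "{..<nobs H} = {x. x < nobs H \<and> \<phi> h x = Gs} \<union> {x. x < nobs H \<and> \<phi> h x = Ds} \<union> {x. x < nobs H \<and> \<phi> h x = Bs}"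
    using lat.exhaust by auto
  hence "nobs H = card ({x. x < nobs H \<and> \<phi> h x = Gs} \<union> {x. x < nobs H \<and> \<phi> h x = Ds} \<union> {x. x < nobs H \<and> \<phi> h x = Bs})"
    by (metis card_lessThan)
  also have "\<dots> = card {x. x < nobs H \<and> \<phi> h x = Gs} + card {x. x < nobs H \<and> \<phi> h x = Ds} + card {x. x < nobs H \<and> \<phi> h x = Bs}"
    by (subst card_Un_disjoint, auto)+
  finally have "card {x. x < nobs H \<and> \<phi> h x = Bs} = nobs H - 2^H - 2^H"
    using G D by linarith
  then have B: "card {x. x < nobs H \<and> \<phi> h x = Bs} = 2^(H+1)"
    by (simp add: nobs_def)
  show ?thesis using G D B by (cases l) (auto simp: Kc_def)
qed

lemma Kc_pos: "0 < Kc H l" by (cases l) (auto simp: Kc_def)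

lemma pmf_unif: "pmf (pmf_of_set {..<nobs H}) x = (if x < nobs H then 1 / real (nobs H) else 0)"
proof -
  have "{..<nobs H} \<noteq> {}" using nobs_pos[of H] by auto
  then show ?thesis by (simp add: indicator_def)
qed

lemma pmf_emit:
  assumes "\<phi> \<in> Phi_set H" "1 \<le> h" "h < H"
  shows "pmf (emit H \<phi> (Suc h) (next_lat \<pi> h l a)) x0 =
         pmf (pmf_of_set {..<nobs H}) x0 * tf H \<pi> h l a (\<phi> (Suc h) x0)"
proof -
  let ?l = "next_lat \<pi> h l a"
  let ?S = "{x. x < nobs H \<and> \<phi> (Suc h) x = ?l}"
  have c: "real (card ?S) = Kc H ?l" using phi_card[OF assms(1), of "Suc h"] assms by auto
  have ne: "?S \<noteq> {}"
  proof
    assume "?S = {}"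
    then have "real (card ?S) = 0" by simp
    with c Kc_pos[of H ?l] show False by simp
  qed
  have fin: "finite ?S" by (rule finite_subset[of _ "{..<nobs H}"]) auto
  have "pmf (emit H \<phi> (Suc h) ?l) x0 = indicator ?S x0 / card ?S"
    unfolding emit_def using ne fin by simp
  then show ?thesis
    using c nobs_pos[of H] Kc_pos[of H ?l]
    by (auto simp: tf_def indicator_def pmf_unif)
qed

lemma pmf_reward:
  "pmf (reward_pmf H \<pi> h l a) r = pmf (if h < H then return_pmf False else bernoulli_pmf (1/2)) r * rf H \<pi> h l a r"
  by (auto simp: rf_def reward_pmf_def)

lemma gen_ratio:
  assumes "\<phi> \<in> Phi_set H" "1 \<le> h" "n + h = H + 1"
  shows "pmf (gen n H (\<pi>,\<phi>) act h x ps0) ps = pmf (genQ n H act h x ps0) ps * Rw H (\<pi>,\<phi>) h (drop (length ps0) ps)"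
  using assms(2,3)
proof (induction n arbitrary: h x ps0)
  case 0 then show ?case by (auto simp: indicator_def)
next
  case (Suc n)
  define a where "a = act ps0 x"
  define l where "l = \<phi> h x"
  define r0 where "r0 = snd (snd (ps ! length ps0))"
  define x0 where "x0 = fst (ps ! Suc (length ps0))"
  define rewQ where "rewQ = (if h < H then return_pmf False else bernoulli_pmf (1/2))"
  define ps1 where "ps1 = ps0 @ [(x,a,r0)]"
  have P1: "pmf (gen (Suc n) H (\<pi>,\<phi>) act h x ps0) ps = pmf (reward_pmf H \<pi> h l a) r0 *
       pmf (if H \<le> h then return_pmf ps1
        else bind_pmf (emit H \<phi> (Suc h) (next_lat \<pi> h l a)) (\<lambda>x'. gen n H (\<pi>,\<phi>) act (Suc h) x' ps1)) ps"
    unfolding gen.simps Let_def fst_conv snd_conv a_def[symmetric] l_def[symmetric] ps1_def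
  proof (rule pmf_bind_collapse)
    fix r assume "r \<noteq> r0"
    show "pmf (if H \<le> h then return_pmf (ps0 @ [(x, a, r)])
           else emit H \<phi> (Suc h) (next_lat \<pi> h l a) \<bind> (\<lambda>x'. gen n H (\<pi>, \<phi>) act (Suc h) x' (ps0 @ [(x, a, r)]))) ps = 0"
    proof (cases "H \<le> h")
      case True then show ?thesis using \<open>r \<noteq> r0\<close> by (auto simp: r0_def indicator_def)
    next
      case False
      have "ps \<notin> set_pmf (emit H \<phi> (Suc h) (next_lat \<pi> h l a) \<bind> (\<lambda>x'. gen n H (\<pi>, \<phi>) act (Suc h) x' (ps0 @ [(x, a, r)])))"
      proof
        assume "ps \<in> set_pmf (emit H \<phi> (Suc h) (next_lat \<pi> h l a) \<bind> (\<lambda>x'. gen n H (\<pi>, \<phi>) act (Suc h) x' (ps0 @ [(x, a, r)])))"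
        then obtain x' where "ps \<in> set_pmf (gen n H (\<pi>, \<phi>) act (Suc h) x' (ps0 @ [(x, a, r)]))" by auto
        from gen_prefix[OF this] have "ps ! length ps0 = (x,a,r)" by (auto simp: nth_append)
        thus False using \<open>r \<noteq> r0\<close> by (auto simp: r0_def)
      qed
      then have "pmf (emit H \<phi> (Suc h) (next_lat \<pi> h l a) \<bind> (\<lambda>x'. gen n H (\<pi>, \<phi>) act (Suc h) x' (ps0 @ [(x, a, r)]))) ps = 0"
        by (meson pmf_eq_0_set_pmf)
      then show ?thesis using False by simp
    qed
  qed
  have Q1: "pmf (genQ (Suc n) H act h x ps0) ps = pmf rewQ r0 *
       pmf (if H \<le> h then return_pmf ps1
        else bind_pmf (pmf_of_set {..<nobs H}) (\<lambda>x'. genQ n H act (Suc h) x' ps1)) ps"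
    unfolding genQ.simps Let_def a_def[symmetric] ps1_def rewQ_def
  proof (rule pmf_bind_collapse)
    fix r assume "r \<noteq> r0"
    show "pmf (if H \<le> h then return_pmf (ps0 @ [(x, a, r)])
           else pmf_of_set {..<nobs H} \<bind> (\<lambda>x'. genQ n H act (Suc h) x' (ps0 @ [(x, a, r)]))) ps = 0"
    proof (cases "H \<le> h")
      case True then show ?thesis using \<open>r \<noteq> r0\<close> by (auto simp: r0_def indicator_def)
    next
      case False
      have "ps \<notin> set_pmf (pmf_of_set {..<nobs H} \<bind> (\<lambda>x'. genQ n H act (Suc h) x' (ps0 @ [(x, a, r)])))"
      proof
        assume "ps \<in> set_pmf (pmf_of_set {..<nobs H} \<bind> (\<lambda>x'. genQ n H act (Suc h) x' (ps0 @ [(x, a, r)])))"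
        then obtain x' where "ps \<in> set_pmf (genQ n H act (Suc h) x' (ps0 @ [(x, a, r)]))" by auto
        from genQ_prefix[OF this] have "ps ! length ps0 = (x,a,r)" by (auto simp: nth_append)
        thus False using \<open>r \<noteq> r0\<close> by (auto simp: r0_def)
      qed
      then have "pmf (pmf_of_set {..<nobs H} \<bind> (\<lambda>x'. genQ n H act (Suc h) x' (ps0 @ [(x, a, r)]))) ps = 0"
        by (meson pmf_eq_0_set_pmf)
      then show ?thesis using False by simp
    qed
  qed
  have rw: "pmf (reward_pmf H \<pi> h l a) r0 = pmf rewQ r0 * rf H \<pi> h l a r0"
    unfolding rewQ_def by (rule pmf_reward)
  show ?case
  proof (cases "H \<le> h")
    case True
    show ?thesis
    proof (cases "ps = ps1")
      case True
      then have "drop (length ps0) ps = [(x,a,r0)]" by (simp add: ps1_def)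
      then show ?thesis using P1 Q1 rw \<open>H \<le> h\<close> \<open>ps = ps1\<close> by (simp add: l_def)
    next
      case False
      then show ?thesis using P1 Q1 \<open>H \<le> h\<close> by simp
    qed
  next
    case False
    then obtain n' where n': "n = Suc n'" using Suc.prems by (cases n) auto
    have IH: "\<And>x'. pmf (gen n H (\<pi>,\<phi>) act (Suc h) x' ps1) ps = pmf (genQ n H act (Suc h) x' ps1) ps * Rw H (\<pi>,\<phi>) (Suc h) (drop (length ps1) ps)"
      using Suc.IH[of "Suc h"] Suc.prems by auto
    have P2: "pmf (bind_pmf (emit H \<phi> (Suc h) (next_lat \<pi> h l a)) (\<lambda>x'. gen n H (\<pi>,\<phi>) act (Suc h) x' ps1)) ps
       = pmf (emit H \<phi> (Suc h) (next_lat \<pi> h l a)) x0 * pmf (gen n H (\<pi>,\<phi>) act (Suc h) x0 ps1) ps"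
    proof (rule pmf_bind_collapse)
      fix x' assume "x' \<noteq> x0"
      have "ps \<notin> set_pmf (gen n H (\<pi>, \<phi>) act (Suc h) x' ps1)"
      proof
        assume "ps \<in> set_pmf (gen n H (\<pi>, \<phi>) act (Suc h) x' ps1)"
        from gen_prefix[OF this] n' have "fst (ps ! Suc (length ps0)) = x'" by (auto simp: nth_append ps1_def)
        thus False using \<open>x' \<noteq> x0\<close> by (auto simp: x0_def)
      qed
      then show "pmf (gen n H (\<pi>, \<phi>) act (Suc h) x' ps1) ps = 0" by (meson pmf_eq_0_set_pmf)
    qed
    have Q2: "pmf (bind_pmf (pmf_of_set {..<nobs H}) (\<lambda>x'. genQ n H act (Suc h) x' ps1)) ps
       = pmf (pmf_of_set {..<nobs H}) x0 * pmf (genQ n H act (Suc h) x0 ps1) ps"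
    proof (rule pmf_bind_collapse)
      fix x' assume "x' \<noteq> x0"
      have "ps \<notin> set_pmf (genQ n H act (Suc h) x' ps1)"
      proof
        assume "ps \<in> set_pmf (genQ n H act (Suc h) x' ps1)"
        from genQ_prefix[OF this] n' have "fst (ps ! Suc (length ps0)) = x'" by (auto simp: nth_append ps1_def)
        thus False using \<open>x' \<noteq> x0\<close> by (auto simp: x0_def)
      qed
      then show "pmf (genQ n H act (Suc h) x' ps1) ps = 0" by (meson pmf_eq_0_set_pmf)
    qed
    have em: "pmf (emit H \<phi> (Suc h) (next_lat \<pi> h l a)) x0 = pmf (pmf_of_set {..<nobs H}) x0 * tf H \<pi> h l a (\<phi> (Suc h) x0)"
      using pmf_emit[OF assms(1)] Suc.prems False by simp
    show ?thesis
    proof (cases "ps \<in> set_pmf (genQ n H act (Suc h) x0 ps1)")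
      case True
      from genQ_prefix[OF True] n' obtain a' r' rest where ps: "ps = ps1 @ (x0,a',r')#rest" by auto
      have d0: "drop (length ps0) ps = (x,a,r0)#(x0,a',r')#rest" by (simp add: ps ps1_def)
      have d1: "drop (length ps1) ps = (x0,a',r')#rest" by (simp add: ps)
      show ?thesis using P1 Q1 P2 Q2 IH em rw False unfolding d0 d1
        by (simp add: l_def)
    next
      case False
      then have "pmf (genQ n H act (Suc h) x0 ps1) ps = 0" by (meson pmf_eq_0_set_pmf)
      then show ?thesis using P1 Q1 P2 Q2 IH \<open>\<not> H \<le> h\<close> by simp
    qed
  qed
qed

lemma start_unif:
  assumes "\<phi> \<in> Phi_set H"
  shows "(if h0 = 1 then emit H \<phi> 1 Gs else reset H) = pmf_of_set {..<nobs H}"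
proof -
  have "{x. x < nobs H \<and> \<phi> 1 x = Gs} = {..<nobs H}" using phi_layer1[OF assms] by auto
  then show ?thesis by (simp add: emit_def reset_def)
qed

lemma episode_ratio:
  assumes "\<phi> \<in> Phi_set H" "1 \<le> st hist" "st hist \<le> H"
  shows "pmf (episode H (\<pi>,\<phi>) st act hist) e = pmf (episodeQ H st act hist) e * Rw H (\<pi>,\<phi>) (fst e) (snd e)"
proof -
  obtain h' ps where e: "e = (h', ps)" by (cases e)
  let ?h0 = "st hist"
  let ?U = "pmf_of_set {..<nobs H}"
  have epi: "episode H (\<pi>,\<phi>) st act hist = bind_pmf ?U (\<lambda>x. map_pmf (\<lambda>ps. (?h0, ps)) (gen (H + 1 - ?h0) H (\<pi>,\<phi>) (act hist) ?h0 x []))"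
  proof -
    have su: "(if st hist = 1 then emit H \<phi> 1 Gs else reset H) = ?U" by (rule start_unif[OF assms(1)])
    show ?thesis unfolding episode_def Let_def su snd_conv by (rule refl)
  qed
  have epiQ: "episodeQ H st act hist = bind_pmf ?U (\<lambda>x. map_pmf (\<lambda>ps. (?h0, ps)) (genQ (H + 1 - ?h0) H (act hist) ?h0 x []))"
    unfolding episodeQ_def by simp
  show ?thesis
  proof (cases "h' = ?h0")
    case False
    have "e \<notin> set_pmf (episode H (\<pi>,\<phi>) st act hist)" using False unfolding epi e by auto
    moreover have "e \<notin> set_pmf (episodeQ H st act hist)" using False unfolding epiQ e by auto
    ultimately show ?thesis by (metis mult_zero_left pmf_eq_0_set_pmf)
  next
    case True
    have inj: "inj (\<lambda>ps. (?h0, ps))" by (auto intro: injI)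
    have mp: "\<And>p. pmf (map_pmf (\<lambda>ps. (?h0, ps)) p) (?h0, ps) = pmf p ps"
      by (rule pmf_map_inj'[OF inj])
    define x0 where "x0 = fst (hd ps)"
    have n0: "0 < H + 1 - ?h0" using assms by simp
    have P: "pmf (episode H (\<pi>,\<phi>) st act hist) e = pmf ?U x0 * pmf (map_pmf (\<lambda>ps. (?h0, ps)) (gen (H + 1 - ?h0) H (\<pi>,\<phi>) (act hist) ?h0 x0 [])) (?h0, ps)"
      unfolding epi e True
    proof (rule pmf_bind_collapse)
      fix x assume "x \<noteq> x0"
      have "ps \<notin> set_pmf (gen (H + 1 - ?h0) H (\<pi>,\<phi>) (act hist) ?h0 x [])"
      proof
        assume "ps \<in> set_pmf (gen (H + 1 - ?h0) H (\<pi>,\<phi>) (act hist) ?h0 x [])"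
        from gen_prefix[OF this] n0 have "fst (hd ps) = x" by auto
        then show False using \<open>x \<noteq> x0\<close> x0_def by simp
      qed
      then show "pmf (map_pmf (\<lambda>ps. (?h0, ps)) (gen (H + 1 - ?h0) H (\<pi>,\<phi>) (act hist) ?h0 x [])) (?h0, ps) = 0" unfolding mp by (meson pmf_eq_0_set_pmf)
    qed
    have Q: "pmf (episodeQ H st act hist) e = pmf ?U x0 * pmf (map_pmf (\<lambda>ps. (?h0, ps)) (genQ (H + 1 - ?h0) H (act hist) ?h0 x0 [])) (?h0, ps)"
      unfolding epiQ e True
    proof (rule pmf_bind_collapse)
      fix x assume "x \<noteq> x0"
      have "ps \<notin> set_pmf (genQ (H + 1 - ?h0) H (act hist) ?h0 x [])"
      proof
        assume "ps \<in> set_pmf (genQ (H + 1 - ?h0) H (act hist) ?h0 x [])"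
        from genQ_prefix[OF this] n0 have "fst (hd ps) = x" by auto
        then show False using \<open>x \<noteq> x0\<close> x0_def by simp
      qed
      then show "pmf (map_pmf (\<lambda>ps. (?h0, ps)) (genQ (H + 1 - ?h0) H (act hist) ?h0 x [])) (?h0, ps) = 0" unfolding mp by (meson pmf_eq_0_set_pmf)
    qed
    have g: "pmf (gen (H + 1 - ?h0) H (\<pi>,\<phi>) (act hist) ?h0 x0 []) ps = pmf (genQ (H + 1 - ?h0) H (act hist) ?h0 x0 []) ps * Rw H (\<pi>,\<phi>) ?h0 ps"
      using gen_ratio[OF assms(1), of ?h0 "H + 1 - ?h0" \<pi> "act hist" x0 "[]" ps] assms by simp
    show ?thesis using P Q g e True unfolding mp by simp
  qed
qed

definition Rh :: "nat \<Rightarrow> theta \<Rightarrow> episode list \<Rightarrow> real" where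
  "Rh H \<theta> es = prod_list (map (\<lambda>e. Rw H \<theta> (fst e) (snd e)) es)"

lemma runQ_prefix: "hs \<in> set_pmf (runQ H st act n hist) \<Longrightarrow> \<exists>es. hs = hist @ es \<and> length es = n"
proof (induction n arbitrary: hist)
  case 0 then show ?case by simp
next
  case (Suc n)
  then obtain e where "hs \<in> set_pmf (runQ H st act n (hist @ [e]))" by auto
  from Suc.IH[OF this] show ?case by auto
qed

lemma run_ratio:
  assumes "\<phi> \<in> Phi_set H" "\<forall>hs. 1 \<le> st hs \<and> st hs \<le> H"
  shows "pmf (run H (\<pi>,\<phi>) st act n hist) hs = pmf (runQ H st act n hist) hs * Rh H (\<pi>,\<phi>) (drop (length hist) hs)"
proof (induction n arbitrary: hist)
  case 0 then show ?case by (auto simp: indicator_def Rh_def)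
next
  case (Suc n)
  define e0 where "e0 = hs ! length hist"
  have Q: "pmf (runQ H st act (Suc n) hist) hs = pmf (episodeQ H st act hist) e0 * pmf (runQ H st act n (hist @ [e0])) hs"
    unfolding runQ.simps
  proof (rule pmf_bind_collapse)
    fix e assume "e \<noteq> e0"
    have "hs \<notin> set_pmf (runQ H st act n (hist @ [e]))"
    proof
      assume "hs \<in> set_pmf (runQ H st act n (hist @ [e]))"
      from runQ_prefix[OF this] have "hs ! length hist = e" by (auto simp: nth_append)
      then show False using \<open>e \<noteq> e0\<close> e0_def by simp
    qed
    then show "pmf (runQ H st act n (hist @ [e])) hs = 0" by (meson pmf_eq_0_set_pmf)
  qed
  have P: "pmf (run H (\<pi>,\<phi>) st act (Suc n) hist) hs = pmf (episode H (\<pi>,\<phi>) st act hist) e0 * pmf (run H (\<pi>,\<phi>) st act n (hist @ [e0])) hs"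
    unfolding run.simps
  proof (rule pmf_bind_collapse)
    fix e assume "e \<noteq> e0"
    have "hs \<notin> set_pmf (runQ H st act n (hist @ [e]))"
    proof
      assume "hs \<in> set_pmf (runQ H st act n (hist @ [e]))"
      from runQ_prefix[OF this] have "hs ! length hist = e" by (auto simp: nth_append)
      then show False using \<open>e \<noteq> e0\<close> e0_def by simp
    qed
    then show "pmf (run H (\<pi>,\<phi>) st act n (hist @ [e])) hs = 0" using Suc.IH[of "hist @ [e]"]
      by (simp add: pmf_eq_0_set_pmf)
  qed
  have E: "pmf (episode H (\<pi>,\<phi>) st act hist) e0 = pmf (episodeQ H st act hist) e0 * Rw H (\<pi>,\<phi>) (fst e0) (snd e0)"
    using episode_ratio[OF assms(1)] assms(2) by blast
  show ?case
  proof (cases "hs \<in> set_pmf (runQ H st act n (hist @ [e0]))")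
    case True
    from runQ_prefix[OF True] obtain es where hs: "hs = hist @ [e0] @ es" by auto
    have "drop (length hist) hs = e0 # drop (length (hist @ [e0])) hs" by (simp add: hs)
    then have "Rh H (\<pi>,\<phi>) (drop (length hist) hs) = Rw H (\<pi>,\<phi>) (fst e0) (snd e0) * Rh H (\<pi>,\<phi>) (drop (length (hist @ [e0])) hs)"
      by (simp add: Rh_def)
    then show ?thesis using P Q E Suc.IH[of "hist @ [e0]"] by simp
  next
    case False
    then have "pmf (runQ H st act n (hist @ [e0])) hs = 0" by (meson pmf_eq_0_set_pmf)
    then show ?thesis using P Q Suc.IH[of "hist @ [e0]"] by simp
  qed
qed



definition dep :: "(nat \<times> nat) set \<Rightarrow> ((nat \<Rightarrow> nat \<Rightarrow> lat) \<Rightarrow> real) \<Rightarrow> bool" where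
  "dep S F = (\<forall>\<phi> \<phi>'. (\<forall>p\<in>S. \<phi> (fst p) (snd p) = \<phi>' (fst p) (snd p)) \<longrightarrow> F \<phi> = F \<phi>')"

definition tr :: "nat \<Rightarrow> nat \<Rightarrow> nat \<Rightarrow> nat" where
  "tr y z x = (if x = y then z else if x = z then y else x)"

definition sw :: "nat \<Rightarrow> nat \<Rightarrow> nat \<Rightarrow> (nat \<Rightarrow> nat \<Rightarrow> lat) \<Rightarrow> (nat \<Rightarrow> nat \<Rightarrow> lat)" where
  "sw h' y z \<phi> = (\<lambda>h x. if h = h' then \<phi> h (tr y z x) else \<phi> h x)"

lemma tr_tr[simp]: "tr y z (tr y z x) = x" by (auto simp: tr_def)

lemma sw_sw[simp]: "sw h' y z (sw h' y z \<phi>) = \<phi>" by (simp add: sw_def fun_eq_iff)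

lemma card_tr:
  assumes "y < m" "z < m"
  shows "card {x. x < m \<and> P (tr y z x)} = card {x. x < m \<and> P x}"
proof -
  have "{x. x < m \<and> P (tr y z x)} = tr y z ` {x. x < m \<and> P x}"
  proof (rule set_eqI, rule iffI)
    fix x assume "x \<in> {x. x < m \<and> P (tr y z x)}"
    then have "tr y z x \<in> {x. x < m \<and> P x}" using assms by (auto simp: tr_def)
    then show "x \<in> tr y z ` {x. x < m \<and> P x}" by (metis image_eqI tr_tr)
  next
    fix x assume "x \<in> tr y z ` {x. x < m \<and> P x}"
    then show "x \<in> {x. x < m \<and> P (tr y z x)}" using assms by (auto simp: tr_def)
  qed
  moreover have "inj (tr y z)" by (metis injI tr_tr)
  ultimately show ?thesis by (simp add: card_image inj_on_subset)
qed

lemma sw_Phi: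
  assumes "\<phi> \<in> Phi_set H" "2 \<le> h'" "h' \<le> H" "y < nobs H" "z < nobs H"
  shows "sw h' y z \<phi> \<in> Phi_set H"
proof -
  have p1: "\<forall>h x. (h = 0 \<or> H < h \<or> nobs H \<le> x) \<longrightarrow> \<phi> h x = Bs"
    using assms(1) unfolding Phi_set_def by blast
  have a: "\<forall>h x. (h = 0 \<or> H < h \<or> nobs H \<le> x) \<longrightarrow> sw h' y z \<phi> h x = Bs"
  proof (intro allI impI)
    fix h x assume hx: "h = 0 \<or> H < h \<or> nobs H \<le> x"
    show "sw h' y z \<phi> h x = Bs"
    proof (cases "h = h'")
      case True
      then have "tr y z x = x" using hx assms(2-5) by (auto simp: tr_def)
      moreover have "\<phi> h' x = Bs" using p1 hx True by blast
      ultimately show ?thesis using True by (simp add: sw_def)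
    next
      case False
      moreover have "\<phi> h x = Bs" using p1 hx by blast
      ultimately show ?thesis by (simp add: sw_def)
    qed
  qed
  have b: "\<forall>x < nobs H. sw h' y z \<phi> 1 x = Gs" using assms(2) phi_layer1[OF assms(1)] by (simp add: sw_def)
  have c: "card {x. x < nobs H \<and> sw h' y z \<phi> h x = l} = card {x. x < nobs H \<and> \<phi> h x = l}" for h l
  proof (cases "h = h'")
    case True
    then show ?thesis using card_tr[OF assms(4,5), of "\<lambda>x. \<phi> h x = l"] by (simp add: sw_def)
  next
    case False
    then show ?thesis by (simp add: sw_def)
  qed
  have d: "\<forall>h. 2 \<le> h \<and> h \<le> H \<longrightarrow>
          card {x. x < nobs H \<and> \<phi> h x = Gs} = 2 ^ H \<and>
          card {x. x < nobs H \<and> \<phi> h x = Ds} = 2 ^ H"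
    using assms(1) unfolding Phi_set_def by blast
  have e: "\<forall>h. 2 \<le> h \<and> h \<le> H \<longrightarrow>
          card {x. x < nobs H \<and> sw h' y z \<phi> h x = Gs} = 2 ^ H \<and>
          card {x. x < nobs H \<and> sw h' y z \<phi> h x = Ds} = 2 ^ H"
    using d c by presburger
  show ?thesis unfolding Phi_set_def mem_Collect_eq using a b e by blast
qed

lemma finite_Phi: "finite (Phi_set H)"
proof -
  let ?D = "{1..H} \<times> {..<nobs H}"
  let ?f = "\<lambda>L h x. if (h,x) \<in> ?D then L (h,x) else Bs"
  have sub: "Phi_set H \<subseteq> ?f ` (PiE ?D (\<lambda>_. UNIV))"
  proof
    fix \<phi> assume p: "\<phi> \<in> Phi_set H"
    have p1: "\<forall>h x. (h = 0 \<or> H < h \<or> nobs H \<le> x) \<longrightarrow> \<phi> h x = Bs"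
      using p unfolding Phi_set_def by blast
    have "\<phi> = ?f (restrict (\<lambda>p. \<phi> (fst p) (snd p)) ?D)"
    proof (intro ext)
      fix h x show "\<phi> h x = ?f (restrict (\<lambda>p. \<phi> (fst p) (snd p)) ?D) h x"
        using p1[rule_format, of h x] by (cases "(h,x) \<in> ?D") auto
    qed
    moreover have "restrict (\<lambda>p. \<phi> (fst p) (snd p)) ?D \<in> PiE ?D (\<lambda>_. UNIV)" by simp
    ultimately show "\<phi> \<in> ?f ` (PiE ?D (\<lambda>_. UNIV))" by (rule image_eqI)
  qed
  have fin: "finite (PiE ?D (\<lambda>_. UNIV :: lat set))" by (intro finite_PiE) auto
  show ?thesis by (rule finite_subset[OF sub]) (rule finite_imageI[OF fin])
qed

lemma lemC1:
  assumes "2 \<le> h'" "h' \<le> H" "y < nobs H" "(h',y) \<notin> S" "finite S" "card {z. (h',z) \<in> S} \<le> n"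
    and dA: "dep S A" and A0: "\<And>\<phi>. 0 \<le> A \<phi>"
  shows "pl H l * (1 - real n / 2^H) * (\<Sum>\<phi>\<in>Phi_set H. A \<phi>) \<le> (\<Sum>\<phi>\<in>Phi_set H. A \<phi> * (if \<phi> h' y = l then 1 else 0))"
proof -
  let ?P = "Phi_set H"
  let ?Z = "{z. z < nobs H \<and> (h',z) \<notin> S}"
  define X where "X = (\<Sum>\<phi>\<in>?P. A \<phi> * (if \<phi> h' y = l then 1 else 0))"
  have same: "(\<Sum>\<phi>\<in>?P. A \<phi> * (if \<phi> h' z = l then 1 else 0)) = X" if z: "z \<in> ?Z" for z
  proof -
    have bij: "bij_betw (sw h' y z) ?P ?P"
      by (rule bij_betwI[where g="sw h' y z"]) (use assms z in \<open>auto intro: sw_Phi\<close>)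
    have "(\<Sum>\<phi>\<in>?P. A \<phi> * (if \<phi> h' z = l then 1 else 0)) = (\<Sum>\<phi>\<in>?P. A (sw h' y z \<phi>) * (if sw h' y z \<phi> h' z = l then 1 else 0))"
      by (rule sum.reindex_bij_betw[OF bij, symmetric])
    also have "\<dots> = X" unfolding X_def
    proof (rule sum.cong[OF refl])
      fix \<phi> assume "\<phi> \<in> ?P"
      have agree: "\<forall>p\<in>S. sw h' y z \<phi> (fst p) (snd p) = \<phi> (fst p) (snd p)"
      proof
        fix p assume "p \<in> S"
        then have "fst p = h' \<Longrightarrow> snd p \<noteq> y \<and> snd p \<noteq> z" using z assms(4) by (cases p) auto
        then show "sw h' y z \<phi> (fst p) (snd p) = \<phi> (fst p) (snd p)" by (auto simp: sw_def tr_def)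
      qed
      have "A (sw h' y z \<phi>) = A \<phi>"
        using dA agree unfolding dep_def by blast
      moreover have "sw h' y z \<phi> h' z = \<phi> h' y" by (simp add: sw_def tr_def)
      ultimately show "A (sw h' y z \<phi>) * (if sw h' y z \<phi> h' z = l then 1 else 0) = A \<phi> * (if \<phi> h' y = l then 1 else 0)" by simp
    qed
    finally show ?thesis .
  qed
  have finZ: "finite ?Z" by (rule finite_subset[of _ "{..<nobs H}"]) auto
  have "(\<Sum>z\<in>?Z. \<Sum>\<phi>\<in>?P. A \<phi> * (if \<phi> h' z = l then 1 else 0)) = (\<Sum>z\<in>?Z. X)"
    by (rule sum.cong[OF refl]) (rule same)
  also have "\<dots> = real (card ?Z) * X" by simp
  finally have e1: "(\<Sum>z\<in>?Z. \<Sum>\<phi>\<in>?P. A \<phi> * (if \<phi> h' z = l then 1 else 0)) = real (card ?Z) * X" .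
  moreover have "(\<Sum>z\<in>?Z. \<Sum>\<phi>\<in>?P. A \<phi> * (if \<phi> h' z = l then 1 else 0)) = (\<Sum>\<phi>\<in>?P. A \<phi> * real (card {z\<in>?Z. \<phi> h' z = l}))"
  proof -
    have "(\<Sum>z\<in>?Z. \<Sum>\<phi>\<in>?P. A \<phi> * (if \<phi> h' z = l then 1 else 0)) = (\<Sum>\<phi>\<in>?P. \<Sum>z\<in>?Z. A \<phi> * (if \<phi> h' z = l then 1 else 0))"
      by (rule sum.swap)
    also have "\<dots> = (\<Sum>\<phi>\<in>?P. A \<phi> * real (card {z\<in>?Z. \<phi> h' z = l}))"
    proof (rule sum.cong[OF refl])
      fix \<phi>
      have "(\<Sum>z\<in>?Z. A \<phi> * (if \<phi> h' z = l then 1 else 0)) = A \<phi> * (\<Sum>z\<in>?Z. (if \<phi> h' z = l then 1 else 0))"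
        by (simp add: sum_distrib_left)
      also have "(\<Sum>z\<in>?Z. (if \<phi> h' z = l then 1 else 0 :: real)) = real (card {z\<in>?Z. \<phi> h' z = l})"
        using sum.inter_filter[OF finZ, of "\<lambda>_. 1::real" "\<lambda>z. \<phi> h' z = l"] by simp
      finally show "(\<Sum>z\<in>?Z. A \<phi> * (if \<phi> h' z = l then 1 else 0)) = A \<phi> * real (card {z\<in>?Z. \<phi> h' z = l})" .
    qed
    finally show ?thesis .
  qed
  moreover have "(Kc H l - real n) * (\<Sum>\<phi>\<in>?P. A \<phi>) \<le> (\<Sum>\<phi>\<in>?P. A \<phi> * real (card {z\<in>?Z. \<phi> h' z = l}))"
  proof -
    have "(Kc H l - real n) * (\<Sum>\<phi>\<in>?P. A \<phi>) = (\<Sum>\<phi>\<in>?P. A \<phi> * (Kc H l - real n))"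
      unfolding sum_distrib_right[symmetric] by (rule mult.commute)
    also have "\<dots> \<le> (\<Sum>\<phi>\<in>?P. A \<phi> * real (card {z\<in>?Z. \<phi> h' z = l}))"
    proof (rule sum_mono)
      fix \<phi> assume p: "\<phi> \<in> ?P"
      have finS': "finite {z. (h',z) \<in> S}"
      proof (rule finite_subset[of _ "snd ` S"])
        show "{z. (h', z) \<in> S} \<subseteq> snd ` S" by force
        show "finite (snd ` S)" using assms(5) by (rule finite_imageI)
      qed
      have sub: "{z. z < nobs H \<and> \<phi> h' z = l} \<subseteq> {z\<in>?Z. \<phi> h' z = l} \<union> {z. (h',z) \<in> S}" by auto
      have "Kc H l = real (card {z. z < nobs H \<and> \<phi> h' z = l})"
        using phi_card[OF p assms(1,2)] by simp
      also have "\<dots> \<le> real (card ({z\<in>?Z. \<phi> h' z = l} \<union> {z. (h',z) \<in> S}))"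
        using card_mono[OF _ sub] finZ finS' by simp
      also have "\<dots> \<le> real (card {z\<in>?Z. \<phi> h' z = l}) + real (card {z. (h',z) \<in> S})"
        using card_Un_le[of "{z\<in>?Z. \<phi> h' z = l}" "{z. (h',z) \<in> S}"] by linarith
      finally have "Kc H l - real n \<le> real (card {z\<in>?Z. \<phi> h' z = l})" using assms(6) by linarith
      then show "A \<phi> * (Kc H l - real n) \<le> A \<phi> * real (card {z\<in>?Z. \<phi> h' z = l})"
        using A0 by (simp add: mult_left_mono)
    qed
    finally show ?thesis .
  qed
  ultimately have key: "(Kc H l - real n) * (\<Sum>\<phi>\<in>?P. A \<phi>) \<le> real (card ?Z) * X" by simp
  have cZ: "real (card ?Z) \<le> real (nobs H)"
    using card_mono[of "{..<nobs H}" ?Z] by auto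
  have cZ1: "1 \<le> real (card ?Z)"
  proof -
    have "y \<in> ?Z" using assms by simp
    then have "card ?Z \<noteq> 0" using finZ card_0_eq by blast
    then show ?thesis by linarith
  qed
  have X0: "0 \<le> X" unfolding X_def using A0 by (auto intro: sum_nonneg)
  have SA0: "0 \<le> (\<Sum>\<phi>\<in>?P. A \<phi>)" using A0 by (auto intro: sum_nonneg)
  have KH: "2^H \<le> Kc H l" by (cases l) (auto simp: Kc_def)
  have M0: "0 < real (nobs H)" using nobs_pos by simp
  show ?thesis
  proof (cases "real n \<le> Kc H l")
    case True
    have "pl H l * (1 - real n / 2^H) = (Kc H l - Kc H l * real n / 2^H) / real (nobs H)"
      by (simp add: pl_def field_simps)
    also have "\<dots> \<le> (Kc H l - real n) / real (nobs H)"
    proof (rule divide_right_mono)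
      have "real n \<le> Kc H l * real n / 2^H"
      proof -
        have "real n * 2 ^ H \<le> real n * Kc H l" using KH by (intro mult_left_mono) auto
        then show ?thesis by (simp add: field_simps)
      qed
      then show "Kc H l - Kc H l * real n / 2 ^ H \<le> Kc H l - real n" by simp
    qed (use M0 in simp)
    finally have s1: "pl H l * (1 - real n / 2^H) \<le> (Kc H l - real n) / real (nobs H)" .
    have "pl H l * (1 - real n / 2^H) * (\<Sum>\<phi>\<in>?P. A \<phi>) \<le> (Kc H l - real n) / real (nobs H) * (\<Sum>\<phi>\<in>?P. A \<phi>)"
      using s1 SA0 by (rule mult_right_mono)
    also have "\<dots> \<le> (Kc H l - real n) / real (card ?Z) * (\<Sum>\<phi>\<in>?P. A \<phi>)"
    proof (rule mult_right_mono[OF _ SA0])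
      show "(Kc H l - real n) / real (nobs H) \<le> (Kc H l - real n) / real (card ?Z)"
        using True cZ cZ1 by (intro divide_left_mono) auto
    qed
    also have "\<dots> \<le> X" using key cZ1 by (simp add: field_simps)
    finally show ?thesis unfolding X_def .
  next
    case False
    then have h2: "(2::real)^H \<le> real n" using KH by linarith
    have "1 \<le> real n / 2^H" using h2 by (simp add: le_divide_eq)
    then have "1 - real n / 2^H \<le> 0" by simp
    moreover have "0 \<le> pl H l" using Kc_pos[of H l] M0 by (simp add: pl_def)
    ultimately have "pl H l * (1 - real n / 2^H) * (\<Sum>\<phi>\<in>?P. A \<phi>) \<le> 0"
      using SA0 by (simp add: mult_nonneg_nonpos mult_nonpos_nonneg)
    then show ?thesis using X0 unfolding X_def by linarith
  qed
qed

lemma lemC: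
  assumes "2 \<le> h'" "h' \<le> H" "y < nobs H" "(h',y) \<notin> S" "finite S" "card {z. (h',z) \<in> S} \<le> n"
    and dB: "\<And>l. dep S (\<lambda>\<phi>. B \<phi> l)" and B0: "\<And>\<phi> l. 0 \<le> B \<phi> l"
  shows "(1 - real n / 2^H) * (\<Sum>\<phi>\<in>Phi_set H. \<Sum>l\<in>UNIV. pl H l * B \<phi> l) \<le> (\<Sum>\<phi>\<in>Phi_set H. B \<phi> (\<phi> h' y))"
proof -
  let ?P = "Phi_set H"
  have "(1 - real n / 2^H) * (\<Sum>\<phi>\<in>?P. \<Sum>l\<in>UNIV. pl H l * B \<phi> l) = (\<Sum>\<phi>\<in>?P. \<Sum>l\<in>UNIV. pl H l * (1 - real n / 2^H) * B \<phi> l)"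
    by (simp add: sum_distrib_left mult_ac)
  also have "\<dots> = (\<Sum>l\<in>UNIV. \<Sum>\<phi>\<in>?P. pl H l * (1 - real n / 2^H) * B \<phi> l)"
    by (rule sum.swap)
  also have "\<dots> = (\<Sum>l\<in>UNIV. pl H l * (1 - real n / 2^H) * (\<Sum>\<phi>\<in>?P. B \<phi> l))"
    by (simp add: sum_distrib_left)
  also have "\<dots> \<le> (\<Sum>l\<in>UNIV. \<Sum>\<phi>\<in>?P. B \<phi> l * (if \<phi> h' y = l then 1 else 0))"
    by (rule sum_mono, rule lemC1[OF assms(1-6) dB B0])
  also have "\<dots> = (\<Sum>\<phi>\<in>?P. \<Sum>l\<in>UNIV. B \<phi> l * (if \<phi> h' y = l then 1 else 0))"
    by (rule sum.swap)
  also have "\<dots> = (\<Sum>\<phi>\<in>?P. B \<phi> (\<phi> h' y))"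
  proof (rule sum.cong[OF refl])
    fix \<phi> show "(\<Sum>l\<in>UNIV. B \<phi> l * (if \<phi> h' y = l then 1 else 0)) = B \<phi> (\<phi> h' y)"
      by (cases "\<phi> h' y") (simp_all add: sum_lat)
  qed
  finally show ?thesis .
qed



fun ptsl :: "nat \<Rightarrow> step list \<Rightarrow> (nat \<times> nat) set" where
  "ptsl h [] = {}"
| "ptsl h (s#rest) = insert (h, fst s) (ptsl (Suc h) rest)"

lemma ptsl_ge: "p \<in> ptsl h steps \<Longrightarrow> h \<le> fst p"
  by (induction h steps rule: ptsl.induct) auto

lemma finite_ptsl: "finite (ptsl h steps)"
  by (induction h steps rule: ptsl.induct) auto

lemma Rw_dep:
  "(\<forall>p\<in>ptsl h steps. \<phi> (fst p) (snd p) = \<phi>' (fst p) (snd p)) \<Longrightarrow> Rw H (\<pi>,\<phi>) h steps = Rw H (\<pi>,\<phi>') h steps"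
  by (induction H "(\<pi>,\<phi>)" h steps rule: Rw.induct) auto

lemma rf_nonneg: "0 \<le> rf H \<pi> h l a r" by (simp add: rf_def)

lemma tf_nonneg: "0 \<le> tf H \<pi> h l a l'"
  unfolding tf_def using Kc_pos[of H l'] by (auto intro: divide_nonneg_pos)

lemma V_nonneg: "0 \<le> V H \<pi> h l s"
  by (induction H \<pi> h l s rule: V.induct) (auto simp: rf_nonneg)

lemma pl_tf: "pl H l' * tf H \<pi> h l a l' = (if l' = next_lat \<pi> h l a then 1 else 0)"
proof (cases "l' = next_lat \<pi> h l a")
  case True
  then show ?thesis using Kc_pos[of H l'] nobs_pos[of H] by (simp add: pl_def tf_def)
qed (simp add: tf_def)

lemma sum_lat_delta: "(\<Sum>l\<in>UNIV. (if l = (l0::lat) then 1 else 0) * f l) = (f l0::real)"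
  by (cases l0) (simp_all add: sum_lat)

lemma lemCh:
  assumes c0: "real n \<le> 2^H"
  shows "\<lbrakk>1 \<le> h; h + length rest \<le> H; finite S;
     \<forall>p\<in>ptsl (Suc h) rest. p \<notin> S \<and> snd p < nobs H \<and> card {z. (fst p, z) \<in> S} \<le> n;
     \<And>l. dep S (\<lambda>\<phi>. B \<phi> l); \<And>\<phi> l. 0 \<le> B \<phi> l\<rbrakk> \<Longrightarrow>
     (1 - real n / 2^H) ^ length rest * (\<Sum>\<phi>\<in>Phi_set H. B \<phi> (\<phi> h x) * V H \<pi> h (\<phi> h x) ((x,a,r)#rest))
       \<le> (\<Sum>\<phi>\<in>Phi_set H. B \<phi> (\<phi> h x) * Rw H (\<pi>,\<phi>) h ((x,a,r)#rest))"
proof (induction rest arbitrary: h x a r B S)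
  case Nil
  then show ?case by simp
next
  case (Cons s rest')
  obtain x' a' r' where s: "s = (x',a',r')" by (cases s)
  let ?c = "1 - real n / 2^H"
  have c_nn: "0 \<le> ?c" using c0 by (simp add: field_simps)
  define B' where "B' = (\<lambda>\<phi> l''. B \<phi> (\<phi> h x) * rf H \<pi> h (\<phi> h x) a r * tf H \<pi> h (\<phi> h x) a l'')"
  define S' where "S' = insert (h,x) S"
  have B'0: "\<And>\<phi> l. 0 \<le> B' \<phi> l" unfolding B'_def using Cons.prems(6) rf_nonneg tf_nonneg
    by (simp add: mult_nonneg_nonneg)
  have dB': "\<And>l. dep S' (\<lambda>\<phi>. B' \<phi> l)"
  proof -
    fix l show "dep S' (\<lambda>\<phi>. B' \<phi> l)"
      unfolding dep_def
    proof (intro allI impI)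
      fix \<phi> \<phi>' :: "nat \<Rightarrow> nat \<Rightarrow> lat" assume ag: "\<forall>p\<in>S'. \<phi> (fst p) (snd p) = \<phi>' (fst p) (snd p)"
      then have e1: "\<phi> h x = \<phi>' h x" by (auto simp: S'_def)
      have "B \<phi> (\<phi> h x) = B \<phi>' (\<phi> h x)"
        using Cons.prems(5)[of "\<phi> h x"] ag unfolding dep_def S'_def by auto
      then show "B' \<phi> l = B' \<phi>' l" unfolding B'_def using e1 by simp
    qed
  qed
  have finS': "finite S'" using Cons.prems(3) by (simp add: S'_def)
  have pts: "ptsl (Suc h) (s # rest') = insert (Suc h, x') (ptsl (Suc (Suc h)) rest')" by (simp add: s)
  have cardS': "card {z. (h'', z) \<in> S'} = card {z. (h'', z) \<in> S}" if "h'' \<noteq> h" for h''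
    using that by (simp add: S'_def)
  have IHc: "\<forall>p\<in>ptsl (Suc (Suc h)) rest'. p \<notin> S' \<and> snd p < nobs H \<and> card {z. (fst p, z) \<in> S'} \<le> n"
  proof
    fix p assume p: "p \<in> ptsl (Suc (Suc h)) rest'"
    then have ge: "Suc (Suc h) \<le> fst p" by (rule ptsl_ge)
    have "p \<notin> S \<and> snd p < nobs H \<and> card {z. (fst p, z) \<in> S} \<le> n" using Cons.prems(4) p pts by auto
    then show "p \<notin> S' \<and> snd p < nobs H \<and> card {z. (fst p, z) \<in> S'} \<le> n"
      using ge cardS'[of "fst p"] by (auto simp: S'_def)
  qed
  have IH: "?c ^ length rest' * (\<Sum>\<phi>\<in>Phi_set H. B' \<phi> (\<phi> (Suc h) x') * V H \<pi> (Suc h) (\<phi> (Suc h) x') ((x',a',r')#rest'))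
       \<le> (\<Sum>\<phi>\<in>Phi_set H. B' \<phi> (\<phi> (Suc h) x') * Rw H (\<pi>,\<phi>) (Suc h) ((x',a',r')#rest'))"
    by (rule Cons.IH[of "Suc h" S' B' x' a' r']) (use Cons.prems finS' IHc dB' B'0 in auto)
  have rhs: "(\<Sum>\<phi>\<in>Phi_set H. B' \<phi> (\<phi> (Suc h) x') * Rw H (\<pi>,\<phi>) (Suc h) ((x',a',r')#rest'))
      = (\<Sum>\<phi>\<in>Phi_set H. B \<phi> (\<phi> h x) * Rw H (\<pi>,\<phi>) h ((x,a,r)#s#rest'))"
    by (rule sum.cong[OF refl]) (simp add: s B'_def mult_ac)
  have x'm: "x' < nobs H" and x'S: "(Suc h, x') \<notin> S" using Cons.prems(4) by (auto simp: s)
  have C: "?c * (\<Sum>\<phi>\<in>Phi_set H. \<Sum>l\<in>UNIV. pl H l * (B' \<phi> l * V H \<pi> (Suc h) l ((x',a',r')#rest')))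
      \<le> (\<Sum>\<phi>\<in>Phi_set H. B' \<phi> (\<phi> (Suc h) x') * V H \<pi> (Suc h) (\<phi> (Suc h) x') ((x',a',r')#rest'))"
  proof (rule lemC)
    show "2 \<le> Suc h" using Cons.prems(1) by simp
    show "Suc h \<le> H" using Cons.prems(2) by simp
    show "x' < nobs H" by (rule x'm)
    show "(Suc h, x') \<notin> S'" using x'S by (simp add: S'_def)
    show "finite S'" by (rule finS')
    show "card {z. (Suc h, z) \<in> S'} \<le> n" using cardS'[of "Suc h"] Cons.prems(4) pts by auto
    show "\<And>l. dep S' (\<lambda>\<phi>. B' \<phi> l * V H \<pi> (Suc h) l ((x', a', r') # rest'))"
      using dB' unfolding dep_def by simp
    show "\<And>\<phi> l. 0 \<le> B' \<phi> l * V H \<pi> (Suc h) l ((x', a', r') # rest')"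
      using B'0 V_nonneg by (simp add: mult_nonneg_nonneg)
  qed
  have lhs: "(\<Sum>\<phi>\<in>Phi_set H. \<Sum>l\<in>UNIV. pl H l * (B' \<phi> l * V H \<pi> (Suc h) l ((x',a',r')#rest')))
      = (\<Sum>\<phi>\<in>Phi_set H. B \<phi> (\<phi> h x) * V H \<pi> h (\<phi> h x) ((x,a,r)#s#rest'))"
  proof (rule sum.cong[OF refl])
    fix \<phi>
    have "(\<Sum>l\<in>UNIV. pl H l * (B' \<phi> l * V H \<pi> (Suc h) l ((x',a',r')#rest')))
        = (\<Sum>l\<in>UNIV. (B \<phi> (\<phi> h x) * rf H \<pi> h (\<phi> h x) a r) * ((pl H l * tf H \<pi> h (\<phi> h x) a l) * V H \<pi> (Suc h) l ((x',a',r')#rest')))"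
      by (rule sum.cong[OF refl]) (simp add: B'_def mult_ac)
    also have "\<dots> = (\<Sum>l\<in>UNIV. (B \<phi> (\<phi> h x) * rf H \<pi> h (\<phi> h x) a r) * ((if l = next_lat \<pi> h (\<phi> h x) a then 1 else 0) * V H \<pi> (Suc h) l ((x',a',r')#rest')))"
      by (simp only: pl_tf)
    also have "\<dots> = (B \<phi> (\<phi> h x) * rf H \<pi> h (\<phi> h x) a r) * (\<Sum>l\<in>UNIV. (if l = next_lat \<pi> h (\<phi> h x) a then 1 else 0) * V H \<pi> (Suc h) l ((x',a',r')#rest'))"
      by (simp only: sum_distrib_left)
    also have "\<dots> = (B \<phi> (\<phi> h x) * rf H \<pi> h (\<phi> h x) a r) * V H \<pi> (Suc h) (next_lat \<pi> h (\<phi> h x) a) ((x',a',r')#rest')"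
      by (simp only: sum_lat_delta)
    also have "\<dots> = B \<phi> (\<phi> h x) * V H \<pi> h (\<phi> h x) ((x,a,r)#s#rest')"
      by (simp add: s)
    finally show "(\<Sum>l\<in>UNIV. pl H l * (B' \<phi> l * V H \<pi> (Suc h) l ((x',a',r')#rest'))) = B \<phi> (\<phi> h x) * V H \<pi> h (\<phi> h x) ((x,a,r)#s#rest')" .
  qed
  have "?c ^ length (s#rest') * (\<Sum>\<phi>\<in>Phi_set H. B \<phi> (\<phi> h x) * V H \<pi> h (\<phi> h x) ((x,a,r)#s#rest'))
      = ?c ^ length rest' * (?c * (\<Sum>\<phi>\<in>Phi_set H. \<Sum>l\<in>UNIV. pl H l * (B' \<phi> l * V H \<pi> (Suc h) l ((x',a',r')#rest'))))"
    by (simp add: lhs)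
  also have "\<dots> \<le> ?c ^ length rest' * (\<Sum>\<phi>\<in>Phi_set H. B' \<phi> (\<phi> (Suc h) x') * V H \<pi> (Suc h) (\<phi> (Suc h) x') ((x',a',r')#rest'))"
    using C c_nn by (simp add: mult_left_mono)
  also have "\<dots> \<le> (\<Sum>\<phi>\<in>Phi_set H. B \<phi> (\<phi> h x) * Rw H (\<pi>,\<phi>) h ((x,a,r)#s#rest'))"
    using IH rhs by simp
  finally show ?case .
qed



lemma VB: "h + length s \<le> H + 1 \<Longrightarrow> V H \<pi> h Bs s = 1"
proof (induction H \<pi> h Bs s rule: V.induct)
  case (1 H \<pi> h) then show ?case by simp
next
  case (2 H \<pi> h x a r) then show ?case by (simp add: rf_def reward_pmf_def)
next
  case (3 H \<pi> h x a r s rest) then show ?case by (simp add: rf_def next_lat_def)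
qed

lemma VGD: "h + length s = H + 1 \<Longrightarrow> s \<noteq> [] \<Longrightarrow> V H \<pi> h Gs s + V H \<pi> h Ds s = 2"
proof (induction s arbitrary: h)
  case Nil then show ?case by simp
next
  case (Cons st rest)
  obtain x a r where st: "st = (x,a,r)" by (cases st)
  show ?case
  proof (cases rest)
    case Nil
    then have "h = H" using Cons.prems by simp
    then show ?thesis using Nil st
      by (cases r; cases "a = \<pi> ! (H - 1)") (simp_all add: rf_def reward_pmf_def)
  next
    case (Cons s' rest')
    have hH: "h < H" using Cons.prems \<open>rest = s' # rest'\<close> by simp
    show ?thesis
    proof (cases "a = \<pi> ! (h - 1)")
      case True
      have "V H \<pi> (Suc h) Gs rest + V H \<pi> (Suc h) Ds rest = 2"
        using Cons.IH[of "Suc h"] Cons.prems \<open>rest = s' # rest'\<close> by simp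
      then show ?thesis using st True hH \<open>rest = s' # rest'\<close> by (simp add: rf_def next_lat_def)
    next
      case False
      have "V H \<pi> (Suc h) Bs rest = 1" using VB[of "Suc h" rest H] Cons.prems by simp
      then show ?thesis using st False hH \<open>rest = s' # rest'\<close> by (simp add: rf_def next_lat_def)
    qed
  qed
qed

lemma VS: "h + length s = H + 1 \<Longrightarrow> s \<noteq> [] \<Longrightarrow> (\<Sum>l\<in>UNIV. pl H l * V H \<pi> h l s) = 1"
proof -
  assume a: "h + length s = H + 1" "s \<noteq> []"
  have g: "V H \<pi> h Gs s + V H \<pi> h Ds s = 2" by (rule VGD[OF a])
  have b: "V H \<pi> h Bs s = 1" using VB[of h s H] a by simp
  have pG: "pl H Gs = 1/4" and pD: "pl H Ds = 1/4" and pB: "pl H Bs = 1/2"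
    by (simp_all add: pl_def Kc_def nobs_def power_add)
  have "(\<Sum>l\<in>UNIV. pl H l * V H \<pi> h l s) = 1/4 * (V H \<pi> h Gs s + V H \<pi> h Ds s) + 1/2 * V H \<pi> h Bs s"
    by (simp add: sum_lat pG pD pB algebra_simps)
  then show ?thesis using g b by simp
qed

fun mm :: "bool list \<Rightarrow> nat \<Rightarrow> step list \<Rightarrow> bool" where
  "mm \<pi> h [] = False"
| "mm \<pi> h [s] = False"
| "mm \<pi> h ((x,a,r)#s#rest) = (a \<noteq> \<pi> ! (h - 1) \<or> mm \<pi> (Suc h) (s#rest))"

lemma V_mm: "h + length s \<le> H + 1 \<Longrightarrow> mm \<pi> h s \<Longrightarrow> V H \<pi> h Gs s = 1"
proof (induction \<pi> h s rule: mm.induct)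
  case (1 \<pi> h) then show ?case by simp
next
  case (2 \<pi> h s) then show ?case by simp
next
  case (3 \<pi> h x a r s rest)
  have hH: "h < H" using "3.prems" by simp
  show ?case
  proof (cases "a = \<pi> ! (h - 1)")
    case True
    then have "mm \<pi> (Suc h) (s#rest)" using "3.prems" by simp
    then have "V H \<pi> (Suc h) Gs (s#rest) = 1" using "3.IH" "3.prems" True by simp
    then show ?thesis using True hH by (simp add: rf_def next_lat_def)
  next
    case False
    have "V H \<pi> (Suc h) Bs (s#rest) = 1" using VB[of "Suc h" "s#rest" H] "3.prems" by simp
    then show ?thesis using False hH by (simp add: rf_def next_lat_def)
  qed
qed

lemma not_mm: "\<not> mm \<pi> h s \<Longrightarrow> i + 1 < length s \<Longrightarrow> \<pi> ! (h + i - 1) = fst (snd (s ! i))"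
proof (induction \<pi> h s arbitrary: i rule: mm.induct)
  case (1 \<pi> h) then show ?case by simp
next
  case (2 \<pi> h s) then show ?case by simp
next
  case (3 \<pi> h x a r s rest)
  show ?case
  proof (cases i)
    case 0 then show ?thesis using "3.prems" by simp
  next
    case (Suc j)
    have "\<pi> ! (Suc h + j - 1) = fst (snd ((s#rest) ! j))"
      using "3.IH"[of j] "3.prems" Suc by simp
    then show ?thesis using Suc by simp
  qed
qed

definition Pib :: "nat \<Rightarrow> bool \<Rightarrow> bool list set" where
  "Pib H b = {\<pi>. length \<pi> = H \<and> \<pi> ! (H - 1) = b}"

lemma finite_Pib: "finite (Pib H b)"
proof (rule finite_subset[of _ "{xs. set xs \<subseteq> UNIV \<and> length xs = H}"])
  show "finite {xs. set xs \<subseteq> (UNIV::bool set) \<and> length xs = H}" by (rule finite_lists_length_eq) simp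
qed (auto simp: Pib_def)

lemma card_Pib: assumes "1 \<le> H" shows "2 ^ (H - 1) \<le> card (Pib H b)"
proof -
  have "card {xs. set xs \<subseteq> (UNIV::bool set) \<and> length xs = H - 1} = 2 ^ (H - 1)"
    using card_lists_length_eq[of "UNIV::bool set" "H - 1"] by simp
  moreover have "card ((\<lambda>w. w @ [b]) ` {xs. set xs \<subseteq> (UNIV::bool set) \<and> length xs = H - 1}) \<le> card (Pib H b)"
    by (rule card_mono[OF finite_Pib]) (use assms in \<open>auto simp: Pib_def nth_append\<close>)
  moreover have "inj (\<lambda>w::bool list. w @ [b])" by (auto intro: injI)
  ultimately show ?thesis by (simp add: card_image inj_on_subset)
qed

lemma card_bad_pi:
  assumes "length s = H" "1 \<le> H"
  shows "card {\<pi>\<in>Pib H b. \<not> mm \<pi> 1 s} \<le> 1"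
proof -
  have eq: "\<forall>p\<in>{\<pi>\<in>Pib H b. \<not> mm \<pi> 1 s}. \<forall>q\<in>{\<pi>\<in>Pib H b. \<not> mm \<pi> 1 s}. p = q"
  proof (intro ballI)
    fix p q assume p: "p \<in> {\<pi>\<in>Pib H b. \<not> mm \<pi> 1 s}" and q: "q \<in> {\<pi>\<in>Pib H b. \<not> mm \<pi> 1 s}"
    show "p = q"
    proof (rule nth_equalityI)
      show "length p = length q" using p q unfolding Pib_def by simp
      fix i assume "i < length p"
      then have i: "i < H" using p unfolding Pib_def by simp
      show "p ! i = q ! i"
      proof (cases "i = H - 1")
        case True
        have "p ! (H - 1) = b" "q ! (H - 1) = b" using p q unfolding Pib_def by blast+
        then show ?thesis using True by simp
      next
        case False
        then have il: "i + 1 < length s" using i assms by simp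
        have pm: "\<not> mm p 1 s" using p by blast
        have qm: "\<not> mm q 1 s" using q by blast
        have "p ! (1 + i - 1) = fst (snd (s ! i))" by (rule not_mm[OF pm il])
        moreover have "q ! (1 + i - 1) = fst (snd (s ! i))" by (rule not_mm[OF qm il])
        ultimately show ?thesis by simp
      qed
    qed
  qed
  have fin: "finite {\<pi>\<in>Pib H b. \<not> mm \<pi> 1 s}" using finite_Pib by simp
  have c: "card {\<pi>\<in>Pib H b. \<not> mm \<pi> 1 s} \<le> Suc 0" by (subst card_le_Suc0_iff_eq[OF fin]) (rule eq)
  then show ?thesis by simp
qed



definition struct :: "nat \<Rightarrow> episode \<Rightarrow> bool" where
  "struct H e = (1 \<le> fst e \<and> fst e \<le> H \<and> length (snd e) = H + 1 - fst e \<and> (\<forall>s\<in>set (snd e). fst s < nobs H))"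

definition pts :: "episode \<Rightarrow> (nat \<times> nat) set" where
  "pts e = ptsl (fst e) (snd e)"

definition Pts :: "episode list \<Rightarrow> (nat \<times> nat) set" where
  "Pts es = (\<Union>e\<in>set es. pts e)"

fun dpts :: "episode list \<Rightarrow> bool" where
  "dpts [] = True"
| "dpts (e#es) = (pts e \<inter> Pts es = {} \<and> dpts es)"

definition W :: "nat \<Rightarrow> bool list \<Rightarrow> episode \<Rightarrow> real" where
  "W H \<pi> e = (if fst e = 1 then V H \<pi> 1 Gs (snd e) else 1)"

lemma W_nonneg: "0 \<le> W H \<pi> e" by (simp add: W_def V_nonneg)

lemma ptsl_snd: "(\<forall>s\<in>set steps. fst s < m) \<Longrightarrow> p \<in> ptsl h steps \<Longrightarrow> snd p < m"
  by (induction h steps rule: ptsl.induct) auto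

lemma ptsl_layer: "(h', z1) \<in> ptsl h steps \<Longrightarrow> (h', z2) \<in> ptsl h steps \<Longrightarrow> z1 = z2"
proof (induction h steps rule: ptsl.induct)
  case (1 h) then show ?case by simp
next
  case (2 h s rest)
  show ?case
  proof (cases "h' = h")
    case True
    then have "(h', z1) \<notin> ptsl (Suc h) rest" "(h', z2) \<notin> ptsl (Suc h) rest"
      using ptsl_ge by fastforce+
    then show ?thesis using "2.prems" by auto
  next
    case False then show ?thesis using "2.prems" "2.IH" by auto
  qed
qed

lemma finite_Pts: "finite (Pts es)" by (simp add: Pts_def pts_def finite_ptsl)

lemma card_layer_Pts: "card {z. (h', z) \<in> Pts es} \<le> length es"
proof -
  have fin: "finite {z. (h', z) \<in> pts e}" for e
  proof (rule finite_subset[of _ "snd ` pts e"])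
    show "{z. (h', z) \<in> pts e} \<subseteq> snd ` pts e" by force
  qed (simp add: pts_def finite_ptsl)
  have one: "card {z. (h', z) \<in> pts e} \<le> 1" for e
  proof -
    have "\<forall>a\<in>{z. (h', z) \<in> pts e}. \<forall>b\<in>{z. (h', z) \<in> pts e}. a = b"
      unfolding pts_def using ptsl_layer by blast
    then have "card {z. (h', z) \<in> pts e} \<le> Suc 0" by (subst card_le_Suc0_iff_eq[OF fin])
    then show ?thesis by simp
  qed
  have "{z. (h', z) \<in> Pts es} = (\<Union>e\<in>set es. {z. (h', z) \<in> pts e})" by (auto simp: Pts_def)
  then have "card {z. (h', z) \<in> Pts es} \<le> (\<Sum>e\<in>set es. card {z. (h', z) \<in> pts e})"
    by (simp add: card_UN_le)
  also have "\<dots> \<le> (\<Sum>e\<in>set es. 1)" by (rule sum_mono) (rule one)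
  also have "\<dots> = card (set es)" by simp
  also have "\<dots> \<le> length es" by (rule card_length)
  finally show ?thesis .
qed

lemma Rw_nonneg: "0 \<le> Rw H \<theta> h steps"
  by (induction H \<theta> h steps rule: Rw.induct) (auto simp: rf_nonneg tf_nonneg)

lemma Rh_Nil[simp]: "Rh H \<theta> [] = 1" by (simp add: Rh_def)

lemma Rh_Cons[simp]: "Rh H \<theta> (e#es) = Rw H \<theta> (fst e) (snd e) * Rh H \<theta> es" by (simp add: Rh_def)

lemma Rh_nonneg: "0 \<le> Rh H \<theta> es"
  by (induction es) (auto simp: Rw_nonneg)

lemma Rh_dep: "dep (Pts es) (\<lambda>\<phi>. Rh H (\<pi>,\<phi>) es)"
  unfolding dep_def
proof (intro allI impI)
  fix \<phi> \<phi>' :: "nat \<Rightarrow> nat \<Rightarrow> lat"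
  assume ag: "\<forall>p\<in>Pts es. \<phi> (fst p) (snd p) = \<phi>' (fst p) (snd p)"
  then show "Rh H (\<pi>,\<phi>) es = Rh H (\<pi>,\<phi>') es"
  proof (induction es)
    case Nil then show ?case by simp
  next
    case (Cons e es)
    have "Rw H (\<pi>,\<phi>) (fst e) (snd e) = Rw H (\<pi>,\<phi>') (fst e) (snd e)"
      by (rule Rw_dep) (use Cons.prems in \<open>auto simp: Pts_def pts_def\<close>)
    moreover have "Rh H (\<pi>,\<phi>) es = Rh H (\<pi>,\<phi>') es"
      by (rule Cons.IH) (use Cons.prems in \<open>auto simp: Pts_def\<close>)
    ultimately show ?case by simp
  qed
qed

lemma lemE:
  assumes st: "struct H e" and fS: "finite S" and dis: "pts e \<inter> S = {}"
    and cnt: "\<forall>p\<in>pts e. card {z. (fst p, z) \<in> S} \<le> n"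
    and dA: "dep S A" and A0: "\<And>\<phi>. 0 \<le> A \<phi>" and c0: "real n \<le> 2^H"
  shows "(1 - real n / 2^H) ^ H * (\<Sum>\<phi>\<in>Phi_set H. A \<phi>) * W H \<pi> e \<le> (\<Sum>\<phi>\<in>Phi_set H. A \<phi> * Rw H (\<pi>,\<phi>) (fst e) (snd e))"
proof -
  let ?c = "1 - real n / 2^H"
  have c_nn: "0 \<le> ?c" using c0 by (simp add: field_simps)
  have c_le: "?c \<le> 1" by simp
  obtain h0 steps where e: "e = (h0, steps)" by (cases e)
  have h01: "1 \<le> h0" and h0H: "h0 \<le> H" and len: "length steps = H + 1 - h0" and obs: "\<forall>s\<in>set steps. fst s < nobs H"
    using st by (auto simp: struct_def e)
  obtain x a r rest where steps: "steps = (x,a,r)#rest" using len h0H by (cases steps) auto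
  have lrest: "length rest = H - h0" using len steps by simp
  have ptse: "pts e = insert (h0, x) (ptsl (Suc h0) rest)" by (simp add: pts_def e steps)
  have SA0: "0 \<le> (\<Sum>\<phi>\<in>Phi_set H. A \<phi>)" using A0 by (simp add: sum_nonneg)
  have ch: "?c ^ length rest * (\<Sum>\<phi>\<in>Phi_set H. A \<phi> * V H \<pi> h0 (\<phi> h0 x) ((x,a,r)#rest))
       \<le> (\<Sum>\<phi>\<in>Phi_set H. A \<phi> * Rw H (\<pi>,\<phi>) h0 ((x,a,r)#rest))"
  proof (rule lemCh[OF c0, where B="\<lambda>\<phi> l. A \<phi>"])
    show "\<forall>p\<in>ptsl (Suc h0) rest. p \<notin> S \<and> snd p < nobs H \<and> card {z. (fst p, z) \<in> S} \<le> n"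
    proof
      fix p assume p: "p \<in> ptsl (Suc h0) rest"
      then have "p \<in> pts e" using ptse by simp
      moreover have "snd p < nobs H" using ptsl_snd[of rest "nobs H" p "Suc h0"] obs p steps by simp
      ultimately show "p \<notin> S \<and> snd p < nobs H \<and> card {z. (fst p, z) \<in> S} \<le> n" using dis cnt by blast
    qed
  qed (use h01 lrest h0H fS dA A0 in auto)
  have x_m: "x < nobs H" using obs steps by simp
  show ?thesis
  proof (cases "h0 = 1")
    case True
    have "(\<Sum>\<phi>\<in>Phi_set H. A \<phi> * V H \<pi> h0 (\<phi> h0 x) ((x,a,r)#rest)) = (\<Sum>\<phi>\<in>Phi_set H. A \<phi>) * W H \<pi> e"
      unfolding sum_distrib_right
    proof (rule sum.cong[OF refl])
      fix \<phi> assume "\<phi> \<in> Phi_set H"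
      then have "\<phi> 1 x = Gs" by (rule phi_layer1[OF _ x_m])
      then show "A \<phi> * V H \<pi> h0 (\<phi> h0 x) ((x,a,r)#rest) = A \<phi> * W H \<pi> e"
        by (simp add: True W_def e steps)
    qed
    moreover have "?c ^ H \<le> ?c ^ length rest" using lrest c_nn c_le by (intro power_decreasing) auto
    moreover have "0 \<le> (\<Sum>\<phi>\<in>Phi_set H. A \<phi>) * W H \<pi> e" using SA0 W_nonneg by simp
    ultimately have "?c ^ H * ((\<Sum>\<phi>\<in>Phi_set H. A \<phi>) * W H \<pi> e) \<le> ?c ^ length rest * (\<Sum>\<phi>\<in>Phi_set H. A \<phi> * V H \<pi> h0 (\<phi> h0 x) ((x,a,r)#rest))"
      by (simp add: mult_right_mono)
    then show ?thesis using ch by (simp add: e steps mult.assoc)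
  next
    case False
    then have h02: "2 \<le> h0" using h01 by simp
    have C: "?c * (\<Sum>\<phi>\<in>Phi_set H. \<Sum>l\<in>UNIV. pl H l * (A \<phi> * V H \<pi> h0 l ((x,a,r)#rest)))
        \<le> (\<Sum>\<phi>\<in>Phi_set H. A \<phi> * V H \<pi> h0 (\<phi> h0 x) ((x,a,r)#rest))"
    proof (rule lemC)
      show "(h0, x) \<notin> S" using dis ptse by blast
      show "card {z. (h0, z) \<in> S} \<le> n" using cnt ptse by auto
      show "\<And>l. dep S (\<lambda>\<phi>. A \<phi> * V H \<pi> h0 l ((x, a, r) # rest))" using dA unfolding dep_def by simp
      show "\<And>\<phi> l. 0 \<le> A \<phi> * V H \<pi> h0 l ((x, a, r) # rest)" using A0 V_nonneg by (simp add: mult_nonneg_nonneg)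
    qed (use h02 h0H x_m fS in auto)
    have vs: "(\<Sum>l\<in>UNIV. pl H l * (A \<phi> * V H \<pi> h0 l ((x,a,r)#rest))) = A \<phi>" for \<phi>
    proof -
      have "(\<Sum>l\<in>UNIV. pl H l * (A \<phi> * V H \<pi> h0 l ((x,a,r)#rest))) = A \<phi> * (\<Sum>l\<in>UNIV. pl H l * V H \<pi> h0 l ((x,a,r)#rest))"
        by (simp add: sum_distrib_left mult_ac)
      also have "(\<Sum>l\<in>UNIV. pl H l * V H \<pi> h0 l ((x,a,r)#rest)) = 1"
        by (rule VS) (use lrest h0H in auto)
      finally show ?thesis by simp
    qed
    have C': "?c * (\<Sum>\<phi>\<in>Phi_set H. A \<phi>) \<le> (\<Sum>\<phi>\<in>Phi_set H. A \<phi> * V H \<pi> h0 (\<phi> h0 x) ((x,a,r)#rest))"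
      using C vs by simp
    have pw: "?c ^ H \<le> ?c ^ Suc (length rest)" using lrest c_nn c_le h02 h0H by (intro power_decreasing) auto
    have "?c ^ H * (\<Sum>\<phi>\<in>Phi_set H. A \<phi>) * W H \<pi> e = ?c ^ H * (\<Sum>\<phi>\<in>Phi_set H. A \<phi>)"
      using False by (simp add: W_def e)
    also have "\<dots> \<le> ?c ^ Suc (length rest) * (\<Sum>\<phi>\<in>Phi_set H. A \<phi>)"
      using pw SA0 by (rule mult_right_mono)
    also have "\<dots> = ?c ^ length rest * (?c * (\<Sum>\<phi>\<in>Phi_set H. A \<phi>))" by simp
    also have "\<dots> \<le> ?c ^ length rest * (\<Sum>\<phi>\<in>Phi_set H. A \<phi> * V H \<pi> h0 (\<phi> h0 x) ((x,a,r)#rest))"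
      using C' c_nn by (simp add: mult_left_mono)
    also have "\<dots> \<le> (\<Sum>\<phi>\<in>Phi_set H. A \<phi> * Rw H (\<pi>,\<phi>) (fst e) (snd e))" using ch by (simp add: e steps)
    finally show ?thesis .
  qed
qed

lemma lemL:
  assumes c0: "real n \<le> 2^H"
  shows "\<lbrakk>\<forall>e\<in>set es. struct H e; dpts es; length es \<le> n + 1\<rbrakk> \<Longrightarrow>
    ((1 - real n / 2^H) ^ H) ^ length es * real (card (Phi_set H)) * prod_list (map (W H \<pi>) es)
      \<le> (\<Sum>\<phi>\<in>Phi_set H. Rh H (\<pi>,\<phi>) es)"
proof (induction es)
  case Nil then show ?case by simp
next
  case (Cons e es)
  let ?c = "1 - real n / 2^H"
  have c_nn: "0 \<le> ?c" using c0 by (simp add: field_simps)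
  have E: "?c ^ H * (\<Sum>\<phi>\<in>Phi_set H. Rh H (\<pi>,\<phi>) es) * W H \<pi> e \<le> (\<Sum>\<phi>\<in>Phi_set H. Rh H (\<pi>,\<phi>) es * Rw H (\<pi>,\<phi>) (fst e) (snd e))"
  proof (rule lemE[OF _ finite_Pts _ _ Rh_dep Rh_nonneg c0])
    show "struct H e" using Cons.prems by simp
    show "pts e \<inter> Pts es = {}" using Cons.prems by simp
    show "\<forall>p\<in>pts e. card {z. (fst p, z) \<in> Pts es} \<le> n"
      using card_layer_Pts[of _ es] Cons.prems(3) by (auto intro: le_trans)
  qed
  have IH: "(?c ^ H) ^ length es * real (card (Phi_set H)) * prod_list (map (W H \<pi>) es) \<le> (\<Sum>\<phi>\<in>Phi_set H. Rh H (\<pi>,\<phi>) es)"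
    using Cons.IH Cons.prems by simp
  have nn: "0 \<le> ?c ^ H * W H \<pi> e" using c_nn W_nonneg by simp
  have "(?c ^ H) ^ length (e#es) * real (card (Phi_set H)) * prod_list (map (W H \<pi>) (e#es))
      = (?c ^ H * W H \<pi> e) * ((?c ^ H) ^ length es * real (card (Phi_set H)) * prod_list (map (W H \<pi>) es))"
    by (simp add: mult_ac)
  also have "\<dots> \<le> (?c ^ H * W H \<pi> e) * (\<Sum>\<phi>\<in>Phi_set H. Rh H (\<pi>,\<phi>) es)"
    using IH nn by (rule mult_left_mono)
  also have "\<dots> \<le> (\<Sum>\<phi>\<in>Phi_set H. Rh H (\<pi>,\<phi>) es * Rw H (\<pi>,\<phi>) (fst e) (snd e))"
    using E by (simp add: mult_ac)
  also have "\<dots> = (\<Sum>\<phi>\<in>Phi_set H. Rh H (\<pi>,\<phi>) (e#es))" by (simp add: mult_ac)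
  finally show ?case .
qed



lemma prod_list_mono_nn:
  fixes f g :: "'a \<Rightarrow> real"
  shows "(\<forall>e\<in>set es. 0 \<le> g e \<and> g e \<le> f e) \<Longrightarrow> 0 \<le> prod_list (map g es) \<and> prod_list (map g es) \<le> prod_list (map f es)"
proof (induction es)
  case Nil then show ?case by simp
next
  case (Cons e es)
  then have a: "0 \<le> g e" "g e \<le> f e" and b: "0 \<le> prod_list (map g es)" "prod_list (map g es) \<le> prod_list (map f es)" by auto
  then show ?case by (simp add: mult_mono)
qed

lemma prodW_nonneg: "0 \<le> prod_list (map (W H \<pi>) es)"
  using prod_list_mono_nn[of es "W H \<pi>" "W H \<pi>"] W_nonneg by auto

lemma sum_W:
  assumes H1: "1 \<le> H" and st: "\<forall>e\<in>set es. struct H e"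
  shows "real (card (Pib H b)) - real (length es) \<le> (\<Sum>\<pi>\<in>Pib H b. prod_list (map (W H \<pi>) es))"
proof -
  define Bad where "Bad = (\<lambda>\<pi>. \<exists>e\<in>set es. fst e = 1 \<and> \<not> mm \<pi> 1 (snd e))"
  define g where "g = (\<lambda>\<pi> (e::episode). if fst e = 1 \<and> \<not> mm \<pi> 1 (snd e) then 0 else (1::real))"
  have pg: "prod_list (map (g \<pi>) es) = (if Bad \<pi> then 0 else 1)" for \<pi>
    unfolding Bad_def by (induction es) (auto simp: g_def)
  have Wg: "prod_list (map (g \<pi>) es) \<le> prod_list (map (W H \<pi>) es)" for \<pi>
  proof -
    have "\<forall>e\<in>set es. 0 \<le> g \<pi> e \<and> g \<pi> e \<le> W H \<pi> e"
    proof
      fix e assume e: "e \<in> set es"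
      show "0 \<le> g \<pi> e \<and> g \<pi> e \<le> W H \<pi> e"
      proof (cases "fst e = 1")
        case True
        show ?thesis
        proof (cases "mm \<pi> 1 (snd e)")
          case True
          have "length (snd e) = H" using st e \<open>fst e = 1\<close> by (auto simp: struct_def)
          then have "V H \<pi> 1 Gs (snd e) = 1" using V_mm[OF _ True] by simp
          then show ?thesis using \<open>fst e = 1\<close> True by (simp add: g_def W_def)
        next
          case False
          then show ?thesis using \<open>fst e = 1\<close> W_nonneg[of H \<pi> e] by (simp add: g_def)
        qed
      next
        case False then show ?thesis by (simp add: g_def W_def)
      qed
    qed
    then show ?thesis using prod_list_mono_nn by blast
  qed
  have finP: "finite (Pib H b)" by (rule finite_Pib)
  have "(\<Sum>\<pi>\<in>Pib H b. prod_list (map (g \<pi>) es)) = (\<Sum>\<pi>\<in>Pib H b. if \<not> Bad \<pi> then 1 else 0)"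
    by (rule sum.cong[OF refl]) (simp add: pg)
  also have "\<dots> = real (card {\<pi>\<in>Pib H b. \<not> Bad \<pi>})"
    using sum.inter_filter[OF finP, of "\<lambda>_. 1::real" "\<lambda>\<pi>. \<not> Bad \<pi>"] by simp
  finally have s1: "(\<Sum>\<pi>\<in>Pib H b. prod_list (map (g \<pi>) es)) = real (card {\<pi>\<in>Pib H b. \<not> Bad \<pi>})" .
  have part: "card (Pib H b) = card {\<pi>\<in>Pib H b. \<not> Bad \<pi>} + card {\<pi>\<in>Pib H b. Bad \<pi>}"
  proof -
    have "Pib H b = {\<pi>\<in>Pib H b. \<not> Bad \<pi>} \<union> {\<pi>\<in>Pib H b. Bad \<pi>}" by auto
    then have "card (Pib H b) = card ({\<pi>\<in>Pib H b. \<not> Bad \<pi>} \<union> {\<pi>\<in>Pib H b. Bad \<pi>})" by simp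
    also have "\<dots> = card {\<pi>\<in>Pib H b. \<not> Bad \<pi>} + card {\<pi>\<in>Pib H b. Bad \<pi>}"
      by (rule card_Un_disjoint) (use finP in auto)
    finally show ?thesis .
  qed
  have bad: "card {\<pi>\<in>Pib H b. Bad \<pi>} \<le> length es"
  proof -
    have "{\<pi>\<in>Pib H b. Bad \<pi>} = (\<Union>e\<in>set es. {\<pi>\<in>Pib H b. fst e = 1 \<and> \<not> mm \<pi> 1 (snd e)})"
      by (auto simp: Bad_def)
    then have "card {\<pi>\<in>Pib H b. Bad \<pi>} \<le> (\<Sum>e\<in>set es. card {\<pi>\<in>Pib H b. fst e = 1 \<and> \<not> mm \<pi> 1 (snd e)})"
      by (simp add: card_UN_le)
    also have "\<dots> \<le> (\<Sum>e\<in>set es. 1)"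
    proof (rule sum_mono)
      fix e assume e: "e \<in> set es"
      show "card {\<pi>\<in>Pib H b. fst e = 1 \<and> \<not> mm \<pi> 1 (snd e)} \<le> 1"
      proof (cases "fst e = 1")
        case True
        have "length (snd e) = H" using st e True by (auto simp: struct_def)
        then show ?thesis using card_bad_pi[of "snd e" H b] H1 True by simp
      qed simp
    qed
    also have "\<dots> \<le> length es" using card_length[of es] by simp
    finally show ?thesis .
  qed
  have "real (card (Pib H b)) - real (length es) \<le> real (card {\<pi>\<in>Pib H b. \<not> Bad \<pi>})"
    using part bad by linarith
  also have "\<dots> \<le> (\<Sum>\<pi>\<in>Pib H b. prod_list (map (W H \<pi>) es))"
    unfolding s1[symmetric] by (rule sum_mono) (rule Wg)
  finally show ?thesis .
qed

lemma Phi_ne: assumes "1 \<le> H" shows "Phi_set H \<noteq> {}"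
proof -
  define \<phi>0 where "\<phi>0 = (\<lambda>h x. if x < nobs H \<and> h = 1 then Gs
      else if x < nobs H \<and> 2 \<le> h \<and> h \<le> H \<and> x < 2^H then Gs
      else if x < nobs H \<and> 2 \<le> h \<and> h \<le> H \<and> 2^H \<le> x \<and> x < 2*2^H then Ds else Bs)"
  have m: "nobs H = 4 * 2^H" by (simp add: nobs_def)
  have G: "{x. x < nobs H \<and> \<phi>0 h x = Gs} = {..<2^H}" if "2 \<le> h" "h \<le> H" for h
    using that by (auto simp: \<phi>0_def m)
  have D: "{x. x < nobs H \<and> \<phi>0 h x = Ds} = {2^H..<2*2^H}" if "2 \<le> h" "h \<le> H" for h
    using that by (auto simp: \<phi>0_def m)
  have "\<phi>0 \<in> Phi_set H"
    unfolding Phi_set_def mem_Collect_eq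
  proof (intro conjI allI impI)
    fix h x assume "h = 0 \<or> H < h \<or> nobs H \<le> x"
    then show "\<phi>0 h x = Bs" using assms by (auto simp: \<phi>0_def)
  next
    fix x assume "x < nobs H" then show "\<phi>0 1 x = Gs" by (simp add: \<phi>0_def)
  next
    fix h assume "2 \<le> h \<and> h \<le> H"
    then show "card {x. x < nobs H \<and> \<phi>0 h x = Gs} = 2 ^ H" using G by simp
  next
    fix h assume "2 \<le> h \<and> h \<le> H"
    then show "card {x. x < nobs H \<and> \<phi>0 h x = Ds} = 2 ^ H" using D by simp
  qed
  then show ?thesis by blast
qed

lemma prod_ge:
  fixes X Y a b :: real
  assumes "0 \<le> X" "1 - a \<le> X" "0 \<le> Y" "1 - b \<le> Y" "0 \<le> a" "0 \<le> b"
  shows "1 - a - b \<le> X * Y"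
proof (cases "a \<le> 1 \<and> b \<le> 1")
  case True
  have "(1 - a) * (1 - b) \<le> X * Y" using assms True by (intro mult_mono) auto
  moreover have "1 - a - b \<le> (1 - a) * (1 - b)" using assms by (simp add: algebra_simps)
  ultimately show ?thesis by linarith
next
  case False
  then have "1 - a - b \<le> 0" using assms by auto
  moreover have "0 \<le> X * Y" using assms by simp
  ultimately show ?thesis by linarith
qed

lemma mix_lower:
  assumes H1: "1 \<le> H" and T2: "real T \<le> 2^H" and st: "\<forall>e\<in>set es. struct H e" and d: "dpts es" and len: "length es = T"
  shows "1 - (real H * real T * real T + 2 * real T) / 2^H
     \<le> (\<Sum>\<theta>\<in>Pib H b \<times> Phi_set H. Rh H \<theta> es) / real (card (Pib H b \<times> Phi_set H))"
proof -
  let ?c = "1 - real T / 2^H"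
  let ?X = "(?c ^ H) ^ T"
  let ?S = "\<lambda>\<pi>. prod_list (map (W H \<pi>) es)"
  have cP: "0 < card (Pib H b)" using card_Pib[OF H1, of b] by (metis le_zero_eq not_gr0 power_not_zero zero_neq_numeral)
  have cF: "0 < card (Phi_set H)" using Phi_ne[OF H1] finite_Phi by (simp add: card_gt_0_iff)
  have c_nn: "0 \<le> ?c" using T2 by (simp add: field_simps)
  have cp: "(\<Sum>\<pi>\<in>Pib H b. \<Sum>\<phi>\<in>Phi_set H. Rh H (\<pi>,\<phi>) es) = (\<Sum>(\<pi>,\<phi>)\<in>Pib H b \<times> Phi_set H. Rh H (\<pi>,\<phi>) es)"
    by (rule sum.cartesian_product)
  have "(\<Sum>\<theta>\<in>Pib H b \<times> Phi_set H. Rh H \<theta> es) = (\<Sum>\<pi>\<in>Pib H b. \<Sum>\<phi>\<in>Phi_set H. Rh H (\<pi>,\<phi>) es)"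
    unfolding cp by (rule sum.cong[OF refl]) auto
  also have "\<dots> \<ge> (\<Sum>\<pi>\<in>Pib H b. ?X * real (card (Phi_set H)) * ?S \<pi>)"
  proof (rule sum_mono)
    fix \<pi> show "?X * real (card (Phi_set H)) * ?S \<pi> \<le> (\<Sum>\<phi>\<in>Phi_set H. Rh H (\<pi>,\<phi>) es)"
      using lemL[OF T2, of es \<pi>] st d len by simp
  qed
  finally have s: "?X * real (card (Phi_set H)) * (\<Sum>\<pi>\<in>Pib H b. ?S \<pi>) \<le> (\<Sum>\<theta>\<in>Pib H b \<times> Phi_set H. Rh H \<theta> es)"
    by (simp add: sum_distrib_left)
  have cprod: "real (card (Pib H b \<times> Phi_set H)) = real (card (Pib H b)) * real (card (Phi_set H))"
    by (simp add: card_cartesian_product)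
  define Y where "Y = (\<Sum>\<pi>\<in>Pib H b. ?S \<pi>) / real (card (Pib H b))"
  have ratio: "?X * Y \<le> (\<Sum>\<theta>\<in>Pib H b \<times> Phi_set H. Rh H \<theta> es) / real (card (Pib H b \<times> Phi_set H))"
  proof -
    have "?X * Y = ?X * real (card (Phi_set H)) * (\<Sum>\<pi>\<in>Pib H b. ?S \<pi>) / real (card (Pib H b \<times> Phi_set H))"
      unfolding Y_def cprod using cF by (simp add: field_simps)
    also have "\<dots> \<le> (\<Sum>\<theta>\<in>Pib H b \<times> Phi_set H. Rh H \<theta> es) / real (card (Pib H b \<times> Phi_set H))"
      using s by (rule divide_right_mono) simp
    finally show ?thesis .
  qed
  have X0: "0 \<le> ?X" using c_nn by simp
  have X1: "1 - real H * real T * real T / 2^H \<le> ?X"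
  proof -
    have eq: "?X = (1 + (- (real T / 2^H))) ^ (H * T)" by (simp add: power_mult)
    have b: "1 + real (H * T) * (- (real T / 2^H)) \<le> (1 + (- (real T / 2^H))) ^ (H * T)"
      by (rule Bernoulli_inequality) (use T2 in \<open>simp add: field_simps\<close>)
    have l: "1 - real H * real T * real T / 2^H = 1 + real (H * T) * (- (real T / 2^H))" by simp
    show ?thesis using eq b l by linarith
  qed
  have Y0: "0 \<le> Y" unfolding Y_def
    by (intro divide_nonneg_nonneg sum_nonneg) (auto intro: prodW_nonneg)
  have Y1: "1 - 2 * real T / 2^H \<le> Y"
  proof -
    have "(real (card (Pib H b)) - real T) / real (card (Pib H b)) \<le> Y"
      unfolding Y_def using sum_W[OF H1 st, of b] len cP by (intro divide_right_mono) auto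
    moreover have "1 - 2 * real T / 2^H \<le> (real (card (Pib H b)) - real T) / real (card (Pib H b))"
    proof -
      have p: "(2::real)^H = 2 * 2^(H-1)" using H1 by (cases H) auto
      have "real (2^(H-1)) \<le> real (card (Pib H b))" using card_Pib[OF H1, of b] by linarith
      then have "(2::real)^(H-1) \<le> real (card (Pib H b))" by simp
      then have "real T / real (card (Pib H b)) \<le> real T / 2^(H-1)"
        by (intro divide_left_mono) (use cP in auto)
      also have "\<dots> = 2 * real T / 2^H" using p by simp
      finally show ?thesis using cP by (simp add: diff_divide_distrib)
    qed
    ultimately show ?thesis by linarith
  qed
  have "1 - real H * real T * real T / 2^H - 2 * real T / 2^H \<le> ?X * Y"
    by (rule prod_ge[OF X0 X1 Y0 Y1]) auto
  then show ?thesis using ratio by (simp add: add_divide_distrib diff_divide_distrib)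
qed



lemma set_unif[simp]: "set_pmf (pmf_of_set {..<nobs H}) = {..<nobs H}"
  using nobs_pos[of H] by (intro set_pmf_of_set) auto

lemma genQ_struct:
  "ps \<in> set_pmf (genQ n H act h x ps0) \<Longrightarrow> n + h = H + 1 \<Longrightarrow> 1 \<le> h \<Longrightarrow> x < nobs H \<Longrightarrow>
     length ps = length ps0 + n \<and> (\<forall>s\<in>set (drop (length ps0) ps). fst s < nobs H)"
proof (induction n arbitrary: h x ps0)
  case 0 then show ?case by simp
next
  case (Suc n)
  from Suc.prems(1) obtain r where r: "ps \<in> set_pmf (let ps' = ps0 @ [(x, act ps0 x, r)] in
        if H \<le> h then return_pmf ps'
        else bind_pmf (pmf_of_set {..< nobs H}) (\<lambda>x'. genQ n H act (Suc h) x' ps'))"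
    by (auto simp: Let_def)
  show ?case
  proof (cases "H \<le> h")
    case True
    then have "n = 0" using Suc.prems by simp
    then show ?thesis using r True Suc.prems by auto
  next
    case False
    with r obtain x' where x': "x' < nobs H" and ps: "ps \<in> set_pmf (genQ n H act (Suc h) x' (ps0 @ [(x, act ps0 x, r)]))"
      using nobs_pos[of H] by (auto simp: Let_def)
    from Suc.IH[OF ps] Suc.prems x' have
      ih: "length ps = Suc (length ps0) + n" "\<forall>s\<in>set (drop (Suc (length ps0)) ps). fst s < nobs H" by auto
    from genQ_prefix[OF ps] obtain new where "ps = ps0 @ [(x, act ps0 x, r)] @ new" by auto
    then have "drop (length ps0) ps = (x, act ps0 x, r) # drop (Suc (length ps0)) ps" by simp
    then show ?thesis using ih Suc.prems by auto
  qed
qed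

lemma episodeQ_struct:
  assumes "e \<in> set_pmf (episodeQ H st act hist)" "1 \<le> st hist" "st hist \<le> H"
  shows "struct H e"
proof -
  from assms(1) obtain x ps where x: "x < nobs H" and e: "e = (st hist, ps)"
    and ps: "ps \<in> set_pmf (genQ (H + 1 - st hist) H (act hist) (st hist) x [])"
    using nobs_pos[of H] by (auto simp: episodeQ_def)
  from genQ_struct[OF ps] assms x show ?thesis by (auto simp: struct_def e)
qed

lemma runQ_struct:
  assumes st: "\<forall>hs. 1 \<le> st hs \<and> st hs \<le> H"
  shows "hs \<in> set_pmf (runQ H st act n hist) \<Longrightarrow> \<forall>e\<in>set (drop (length hist) hs). struct H e"
proof (induction n arbitrary: hist)
  case 0 then show ?case by simp
next
  case (Suc n)
  then obtain e where e: "e \<in> set_pmf (episodeQ H st act hist)" and hs: "hs \<in> set_pmf (runQ H st act n (hist @ [e]))"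
    by auto
  have se: "struct H e" using episodeQ_struct[OF e] st by auto
  from runQ_prefix[OF hs] obtain es where "hs = hist @ [e] @ es" by auto
  then have "drop (length hist) hs = e # drop (length (hist @ [e])) hs" by simp
  then show ?case using Suc.IH[OF hs] se by simp
qed

lemma Theta0_eq: "Theta0 H = Pib H False \<times> Phi_set H"
  by (auto simp: Theta0_def Pib_def Pi_set_def)

lemma Theta1_eq: "Theta1 H = Pib H True \<times> Phi_set H"
  by (auto simp: Theta1_def Pib_def Pi_set_def)

lemma mix_pmf:
  assumes H1: "1 \<le> H" and st: "\<forall>hs. 1 \<le> st hs \<and> st hs \<le> H"
  shows "pmf (bind_pmf (pmf_of_set (Pib H b \<times> Phi_set H)) (\<lambda>\<theta>. run H \<theta> st act T [])) hs
     = pmf (runQ H st act T []) hs * ((\<Sum>\<theta>\<in>Pib H b \<times> Phi_set H. Rh H \<theta> hs) / real (card (Pib H b \<times> Phi_set H)))"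
proof -
  have ne: "Pib H b \<times> Phi_set H \<noteq> {}"
  proof -
    have "Pib H b \<noteq> {}" using card_Pib[OF H1, of b] by (metis card.empty le_zero_eq power_not_zero zero_neq_numeral)
    then show ?thesis using Phi_ne[OF H1] by simp
  qed
  have fin: "finite (Pib H b \<times> Phi_set H)" using finite_Pib finite_Phi by simp
  have "pmf (bind_pmf (pmf_of_set (Pib H b \<times> Phi_set H)) (\<lambda>\<theta>. run H \<theta> st act T [])) hs
      = (\<Sum>\<theta>\<in>Pib H b \<times> Phi_set H. pmf (run H \<theta> st act T []) hs) / real (card (Pib H b \<times> Phi_set H))"
    by (rule pmf_bind_pmf_of_set[OF ne fin])
  also have "(\<Sum>\<theta>\<in>Pib H b \<times> Phi_set H. pmf (run H \<theta> st act T []) hs) = (\<Sum>\<theta>\<in>Pib H b \<times> Phi_set H. pmf (runQ H st act T []) hs * Rh H \<theta> hs)"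
  proof (rule sum.cong[OF refl])
    fix \<theta> assume "\<theta> \<in> Pib H b \<times> Phi_set H"
    then obtain \<pi> \<phi> where t: "\<theta> = (\<pi>,\<phi>)" and p: "\<phi> \<in> Phi_set H" by auto
    show "pmf (run H \<theta> st act T []) hs = pmf (runQ H st act T []) hs * Rh H \<theta> hs"
      using run_ratio[OF p st, of \<pi> act T "[]" hs] t by simp
  qed
  finally show ?thesis by (simp add: sum_distrib_left)
qed

lemma prob_lower:
  assumes "\<And>x. x \<in> A \<Longrightarrow> c * pmf Q x \<le> pmf P x" "0 \<le> c"
  shows "c * measure_pmf.prob Q A \<le> measure_pmf.prob P A"
proof -
  have "c * measure_pmf.prob Q A = infsetsum (\<lambda>x. c * pmf Q x) A"
    unfolding measure_pmf_conv_infsetsum by (rule infsetsum_cmult_right[symmetric]) (rule pmf_abs_summable)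
  also have "\<dots> \<le> infsetsum (pmf P) A"
    by (rule infsetsum_mono) (use assms in auto)
  also have "\<dots> = measure_pmf.prob P A" by (simp add: measure_pmf_conv_infsetsum)
  finally show ?thesis .
qed

lemma tv_one:
  assumes low: "\<And>x. x \<in> set_pmf Q \<Longrightarrow> \<not> Bd x \<Longrightarrow> (1 - \<delta>) * pmf Q x \<le> pmf P x" and d0: "0 \<le> \<delta>" and d1: "\<delta> \<le> 1"
  shows "measure_pmf.prob Q A - measure_pmf.prob P A \<le> measure_pmf.prob Q {x. Bd x} + \<delta>"
proof -
  let ?A' = "A - {x. Bd x}"
  have l: "(1 - \<delta>) * measure_pmf.prob Q ?A' \<le> measure_pmf.prob P ?A'"
  proof (rule prob_lower)
    fix x assume "x \<in> ?A'"
    then show "(1 - \<delta>) * pmf Q x \<le> pmf P x"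
      using low[of x] by (cases "x \<in> set_pmf Q") (auto simp: set_pmf_iff)
  qed (use d1 in simp)
  have "measure_pmf.prob P ?A' \<le> measure_pmf.prob P A" by (rule measure_pmf.finite_measure_mono) auto
  moreover have "measure_pmf.prob Q A \<le> measure_pmf.prob Q (A \<inter> {x. Bd x}) + measure_pmf.prob Q ?A'"
  proof -
    have "A = (A \<inter> {x. Bd x}) \<union> ?A'" by auto
    then have "measure_pmf.prob Q A = measure_pmf.prob Q ((A \<inter> {x. Bd x}) \<union> ?A')" by simp
    also have "\<dots> \<le> measure_pmf.prob Q (A \<inter> {x. Bd x}) + measure_pmf.prob Q ?A'"
      by (rule measure_Un_le) auto
    finally show ?thesis .
  qed
  moreover have "measure_pmf.prob Q (A \<inter> {x. Bd x}) \<le> measure_pmf.prob Q {x. Bd x}" by (rule measure_pmf.finite_measure_mono) auto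
  moreover have "\<delta> * measure_pmf.prob Q ?A' \<le> \<delta>" using d0 by (simp add: mult_left_le)
  ultimately show ?thesis using l by (simp add: algebra_simps)
qed

lemma tv_two:
  assumes low: "\<And>x. x \<in> set_pmf Q \<Longrightarrow> \<not> Bd x \<Longrightarrow> (1 - \<delta>) * pmf Q x \<le> pmf P x" and d0: "0 \<le> \<delta>" and d1: "\<delta> \<le> 1"
  shows "\<bar>measure_pmf.prob P A - measure_pmf.prob Q A\<bar> \<le> measure_pmf.prob Q {x. Bd x} + \<delta>"
proof -
  have a: "measure_pmf.prob Q A - measure_pmf.prob P A \<le> measure_pmf.prob Q {x. Bd x} + \<delta>"
    by (rule tv_one[OF low d0 d1])
  have b: "measure_pmf.prob Q (- A) - measure_pmf.prob P (- A) \<le> measure_pmf.prob Q {x. Bd x} + \<delta>"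
    by (rule tv_one[OF low d0 d1])
  have "measure_pmf.prob Q (- A) = 1 - measure_pmf.prob Q A"
    using measure_pmf.prob_compl[of A Q] by (simp add: Compl_eq_Diff_UNIV)
  moreover have "measure_pmf.prob P (- A) = 1 - measure_pmf.prob P A"
    using measure_pmf.prob_compl[of A P] by (simp add: Compl_eq_Diff_UNIV)
  ultimately show ?thesis using a b by linarith
qed



lemma prob_bind: "measure_pmf.prob (bind_pmf M f) A = (\<integral>x. measure_pmf.prob (f x) A \<partial>M)"
proof -
  have "ennreal (measure_pmf.prob (bind_pmf M f) A) = (\<integral>\<^sup>+x. ennreal (measure_pmf.prob (f x) A) \<partial>M)"
    unfolding measure_pmf.emeasure_eq_measure[symmetric] by simp
  also have "\<dots> = ennreal (\<integral>x. measure_pmf.prob (f x) A \<partial>M)"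
    by (intro nn_integral_eq_integral measure_pmf.integrable_const_bound[where B=1]) auto
  finally show ?thesis by simp
qed

lemma int_bdd: "(\<And>x. \<bar>f x\<bar> \<le> B) \<Longrightarrow> integrable (measure_pmf M) (f :: 'a \<Rightarrow> real)"
  by (rule measure_pmf.integrable_const_bound[where B=B]) auto

lemma int_le_const:
  fixes f :: "'a \<Rightarrow> real"
  assumes "\<And>x. 0 \<le> f x" "\<And>x. f x \<le> C"
  shows "(\<integral>x. f x \<partial>measure_pmf M) \<le> C"
proof -
  have "(\<integral>x. f x \<partial>measure_pmf M) \<le> (\<integral>x. C \<partial>measure_pmf M)"
    by (rule integral_mono) (use assms in \<open>auto intro: int_bdd[where B=C]\<close>)
  then show ?thesis by simp
qed

lemma prob_le1: "measure_pmf.prob M A \<le> 1" by simp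


lemma int_unif: "(\<integral>x. f x \<partial>measure_pmf (pmf_of_set {..<nobs H})) = (\<Sum>x<nobs H. f x) / real (nobs H)"
proof -
  have "{..<nobs H} \<noteq> {}" using nobs_pos[of H] by auto
  then show ?thesis by (simp add: integral_pmf_of_set)
qed

lemma card_layer_unif:
  assumes "finite S"
  shows "(\<Sum>x<nobs H. (if (h, x) \<in> S then 1 else 0 :: real)) \<le> real (card {z. (h, z) \<in> S})"
proof -
  have "(\<Sum>x<nobs H. (if (h, x) \<in> S then 1 else 0 :: real)) = real (card {x\<in>{..<nobs H}. (h, x) \<in> S})"
    using sum.inter_filter[of "{..<nobs H}" "\<lambda>_. 1::real" "\<lambda>x. (h,x) \<in> S"] by simp
  also have "\<dots> \<le> real (card {z. (h, z) \<in> S})"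
  proof -
    have fin: "finite {z. (h, z) \<in> S}"
    proof (rule finite_subset[of _ "snd ` S"])
      show "{z. (h, z) \<in> S} \<subseteq> snd ` S" by force
      show "finite (snd ` S)" using assms by (rule finite_imageI)
    qed
    have "card {x\<in>{..<nobs H}. (h, x) \<in> S} \<le> card {z. (h, z) \<in> S}" by (rule card_mono[OF fin]) auto
    then show ?thesis by simp
  qed
  finally show ?thesis .
qed

lemma genQ_col:
  assumes kap: "\<And>h'. card {z. (h', z) \<in> S} \<le> \<kappa>" and fS: "finite S"
  shows "measure_pmf.prob (genQ n H act h x ps0) {ps. ptsl h (drop (length ps0) ps) \<inter> S \<noteq> {}}
           \<le> (if (h, x) \<in> S then 1 else 0) + real n * real \<kappa> / real (nobs H)"
proof (induction n arbitrary: h x ps0)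
  case 0 then show ?case by simp
next
  case (Suc n)
  let ?E = "\<lambda>h ps0. {ps. ptsl h (drop (length ps0) ps) \<inter> S \<noteq> {}}"
  have m0: "0 < real (nobs H)" using nobs_pos[of H] by simp
  show ?case
  proof (cases "(h, x) \<in> S")
    case True
    have p1: "measure_pmf.prob (genQ (Suc n) H act h x ps0) (?E h ps0) \<le> 1" by (rule prob_le1)
    moreover have "0 \<le> real (Suc n) * real \<kappa> / real (nobs H)" by simp
    moreover have "(if (h, x) \<in> S then 1 else 0) = (1::real)" using True by simp
    ultimately show ?thesis by linarith
  next
    case False
    let ?a = "act ps0 x"
    let ?f = "\<lambda>r. if H \<le> h then return_pmf (ps0 @ [(x, ?a, r)])
        else bind_pmf (pmf_of_set {..< nobs H}) (\<lambda>x'. genQ n H act (Suc h) x' (ps0 @ [(x, ?a, r)]))"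
    have g: "genQ (Suc n) H act h x ps0 = bind_pmf (if h < H then return_pmf False else bernoulli_pmf (1/2)) ?f"
      by (simp add: Let_def)
    have each: "measure_pmf.prob (?f r) (?E h ps0) \<le> real (Suc n) * real \<kappa> / real (nobs H)" for r
    proof (cases "H \<le> h")
      case True
      then have "?E h ps0 \<inter> {ps0 @ [(x, ?a, r)]} = {}" using False by auto
      then have "measure_pmf.prob (?f r) (?E h ps0) = 0" using True by (simp add: indicator_def)
      then show ?thesis by simp
    next
      case hH: False
      let ?ps1 = "ps0 @ [(x, ?a, r)]"
      have inner: "measure_pmf.prob (genQ n H act (Suc h) x' ?ps1) (?E h ps0) \<le> (if (Suc h, x') \<in> S then 1 else 0) + real n * real \<kappa> / real (nobs H)" for x'
      proof -
        have "?E h ps0 \<inter> set_pmf (genQ n H act (Suc h) x' ?ps1) = ?E (Suc h) ?ps1 \<inter> set_pmf (genQ n H act (Suc h) x' ?ps1)"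
        proof (rule set_eqI)
          fix ps
          show "ps \<in> ?E h ps0 \<inter> set_pmf (genQ n H act (Suc h) x' ?ps1) \<longleftrightarrow> ps \<in> ?E (Suc h) ?ps1 \<inter> set_pmf (genQ n H act (Suc h) x' ?ps1)"
          proof (cases "ps \<in> set_pmf (genQ n H act (Suc h) x' ?ps1)")
            case True
            from genQ_prefix[OF True] obtain new where "ps = ?ps1 @ new" by auto
            then have "drop (length ps0) ps = (x, ?a, r) # drop (length ?ps1) ps" by simp
            then show ?thesis using False True by auto
          qed simp
        qed
        then have "measure_pmf.prob (genQ n H act (Suc h) x' ?ps1) (?E h ps0) = measure_pmf.prob (genQ n H act (Suc h) x' ?ps1) (?E (Suc h) ?ps1)"
          by (metis measure_Int_set_pmf)
        also have "\<dots> \<le> (if (Suc h, x') \<in> S then 1 else 0) + real n * real \<kappa> / real (nobs H)"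
          by (rule Suc.IH)
        finally show ?thesis .
      qed
      have "measure_pmf.prob (?f r) (?E h ps0) = (\<integral>x'. measure_pmf.prob (genQ n H act (Suc h) x' ?ps1) (?E h ps0) \<partial>measure_pmf (pmf_of_set {..<nobs H}))"
        using hH by (simp add: prob_bind)
      also have "\<dots> = (\<Sum>x'<nobs H. measure_pmf.prob (genQ n H act (Suc h) x' ?ps1) (?E h ps0)) / real (nobs H)"
        by (rule int_unif)
      also have "\<dots> \<le> (\<Sum>x'<nobs H. (if (Suc h, x') \<in> S then 1 else 0) + real n * real \<kappa> / real (nobs H)) / real (nobs H)"
        by (intro divide_right_mono sum_mono inner) simp
      also have "\<dots> = (\<Sum>x'<nobs H. (if (Suc h, x') \<in> S then 1 else 0 :: real)) / real (nobs H) + real n * real \<kappa> / real (nobs H)"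
        using m0 by (simp add: sum.distrib add_divide_distrib)
      also have "\<dots> \<le> real \<kappa> / real (nobs H) + real n * real \<kappa> / real (nobs H)"
      proof -
        have "(\<Sum>x'<nobs H. (if (Suc h, x') \<in> S then 1 else 0 :: real)) \<le> real \<kappa>"
          using card_layer_unif[OF fS, where H=H and h="Suc h"] kap[of "Suc h"] by linarith
        then show ?thesis using m0 by (simp add: divide_right_mono)
      qed
      also have "\<dots> = real (Suc n) * real \<kappa> / real (nobs H)" by (simp add: add_divide_distrib algebra_simps)
      finally show ?thesis .
    qed
    have "measure_pmf.prob (genQ (Suc n) H act h x ps0) (?E h ps0) = (\<integral>r. measure_pmf.prob (?f r) (?E h ps0) \<partial>measure_pmf (if h < H then return_pmf False else bernoulli_pmf (1/2)))"
      unfolding g by (rule prob_bind)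
    also have "\<dots> \<le> real (Suc n) * real \<kappa> / real (nobs H)"
      by (rule int_le_const) (use each in auto)
    finally show ?thesis using False by simp
  qed
qed


lemma epi_col:
  assumes kap: "\<And>h'. card {z. (h', z) \<in> S} \<le> \<kappa>" and fS: "finite S" and s1: "1 \<le> st hist" and s2: "st hist \<le> H"
  shows "measure_pmf.prob (episodeQ H st act hist) {e. pts e \<inter> S \<noteq> {}} \<le> real (H + 1) * real \<kappa> / real (nobs H)"
proof -
  let ?h0 = "st hist"
  have m0: "0 < real (nobs H)" using nobs_pos[of H] by simp
  have each: "measure_pmf.prob (map_pmf (\<lambda>ps. (?h0, ps)) (genQ (H + 1 - ?h0) H (act hist) ?h0 x [])) {e. pts e \<inter> S \<noteq> {}}
      \<le> (if (?h0, x) \<in> S then 1 else 0) + real (H + 1 - ?h0) * real \<kappa> / real (nobs H)" for x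
  proof -
    have "(\<lambda>ps. (?h0, ps)) -` {e. pts e \<inter> S \<noteq> {}} = {ps. ptsl ?h0 (drop (length ([]::step list)) ps) \<inter> S \<noteq> {}}"
      by (auto simp: pts_def)
    then show ?thesis using genQ_col[OF kap fS, of "H + 1 - ?h0" H "act hist" ?h0 x "[]"] by simp
  qed
  have "measure_pmf.prob (episodeQ H st act hist) {e. pts e \<inter> S \<noteq> {}}
     = (\<Sum>x<nobs H. measure_pmf.prob (map_pmf (\<lambda>ps. (?h0, ps)) (genQ (H + 1 - ?h0) H (act hist) ?h0 x [])) {e. pts e \<inter> S \<noteq> {}}) / real (nobs H)"
    unfolding episodeQ_def prob_bind by (rule int_unif)
  also have "\<dots> \<le> (\<Sum>x<nobs H. (if (?h0, x) \<in> S then 1 else 0) + real (H + 1 - ?h0) * real \<kappa> / real (nobs H)) / real (nobs H)"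
    by (intro divide_right_mono sum_mono each) simp
  also have "\<dots> = (\<Sum>x<nobs H. (if (?h0, x) \<in> S then 1 else 0 :: real)) / real (nobs H) + real (H + 1 - ?h0) * real \<kappa> / real (nobs H)"
    using m0 by (simp add: sum.distrib add_divide_distrib)
  also have "\<dots> \<le> real \<kappa> / real (nobs H) + real H * real \<kappa> / real (nobs H)"
  proof -
    have "(\<Sum>x<nobs H. (if (?h0, x) \<in> S then 1 else 0 :: real)) \<le> real \<kappa>"
      using card_layer_unif[OF fS, where H=H and h="?h0"] kap[of ?h0] by linarith
    moreover have "real (H + 1 - ?h0) \<le> real H" using s1 s2 by simp
    ultimately show ?thesis using m0 by (intro add_mono divide_right_mono mult_right_mono) auto
  qed
  also have "\<dots> = real (H + 1) * real \<kappa> / real (nobs H)" by (simp add: add_divide_distrib algebra_simps)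
  finally show ?thesis .
qed

lemma Pts_snoc: "Pts (hist @ [e]) = Pts hist \<union> pts e" by (auto simp: Pts_def)

lemma dpts_snoc: "dpts (hist @ [e]) = (dpts hist \<and> pts e \<inter> Pts hist = {})"
  by (induction hist) (auto simp: Pts_snoc Pts_def)

definition Fc :: "nat \<Rightarrow> nat \<Rightarrow> nat \<Rightarrow> real" where
  "Fc H n L = (\<Sum>k<n. real (H + 1) * real (L + k) / real (nobs H))"

lemma Fc_nonneg: "0 \<le> Fc H n L" by (simp add: Fc_def sum_nonneg)

lemma Fc_Suc: "Fc H (Suc n) L = real (H + 1) * real L / real (nobs H) + Fc H n (Suc L)"
  unfolding Fc_def by (subst sum.lessThan_Suc_shift) simp

lemma run_col:
  assumes st: "\<forall>hs. 1 \<le> st hs \<and> st hs \<le> H"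
  shows "dpts hist \<Longrightarrow> measure_pmf.prob (runQ H st act n hist) {hs. \<not> dpts hs} \<le> Fc H n (length hist)"
proof (induction n arbitrary: hist)
  case 0 then show ?case by (simp add: Fc_def)
next
  case (Suc n)
  let ?E = "{e. pts e \<inter> Pts hist \<noteq> {}}"
  have pt: "measure_pmf.prob (runQ H st act n (hist @ [e])) {hs. \<not> dpts hs} \<le> indicator ?E e + Fc H n (Suc (length hist))" for e
  proof (cases "e \<in> ?E")
    case True
    have "measure_pmf.prob (runQ H st act n (hist @ [e])) {hs. \<not> dpts hs} \<le> 1" by (rule prob_le1)
    moreover have "indicator ?E e = (1::real)" using True by simp
    ultimately show ?thesis using Fc_nonneg[of H n "Suc (length hist)"] by linarith
  next
    case False
    then have "dpts (hist @ [e])" using Suc.prems by (simp add: dpts_snoc)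
    from Suc.IH[OF this] False show ?thesis by simp
  qed
  have "measure_pmf.prob (runQ H st act (Suc n) hist) {hs. \<not> dpts hs}
      = (\<integral>e. measure_pmf.prob (runQ H st act n (hist @ [e])) {hs. \<not> dpts hs} \<partial>measure_pmf (episodeQ H st act hist))"
    by (simp add: prob_bind)
  also have "\<dots> \<le> (\<integral>e. indicator ?E e + Fc H n (Suc (length hist)) \<partial>measure_pmf (episodeQ H st act hist))"
  proof (rule integral_mono)
    show "integrable (measure_pmf (episodeQ H st act hist)) (\<lambda>e. measure_pmf.prob (runQ H st act n (hist @ [e])) {hs. \<not> dpts hs})"
      by (rule int_bdd[where B=1]) simp
    show "integrable (measure_pmf (episodeQ H st act hist)) (\<lambda>e. indicator ?E e + Fc H n (Suc (length hist)))"
      by (rule int_bdd[where B="1 + Fc H n (Suc (length hist))"]) (use Fc_nonneg in \<open>auto simp: indicator_def\<close>)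
  qed (rule pt)
  also have "\<dots> = measure_pmf.prob (episodeQ H st act hist) ?E + Fc H n (Suc (length hist))"
    by (subst Bochner_Integration.integral_add) (auto intro: int_bdd[where B=1] simp: indicator_def)
  also have "\<dots> \<le> real (H + 1) * real (length hist) / real (nobs H) + Fc H n (Suc (length hist))"
    using epi_col[OF card_layer_Pts finite_Pts, where st=st and hist=hist and act=act and H=H] st by simp
  also have "\<dots> = Fc H (Suc n) (length hist)" by (simp add: Fc_Suc)
  finally show ?case .
qed

lemma Fc_bound: "Fc H T 0 \<le> real (H + 1) * real T * real T / real (nobs H)"
proof -
  have "Fc H T 0 \<le> (\<Sum>k<T. real (H + 1) * real T / real (nobs H))"
    unfolding Fc_def by (intro sum_mono divide_right_mono mult_left_mono) auto
  also have "\<dots> = real (H + 1) * real T * real T / real (nobs H)" by simp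
  finally show ?thesis .
qed



lemma abs2: "\<bar>a - q\<bar> \<le> c \<Longrightarrow> \<bar>b - q\<bar> \<le> c \<Longrightarrow> \<bar>a - b\<bar> \<le> 2 * (c::real)"
  by arith

lemma mix_law_eq:
  "mix_law H (Pib H b \<times> Phi_set H) st act out T =
     map_pmf (\<lambda>hs. (hs, out hs)) (bind_pmf (pmf_of_set (Pib H b \<times> Phi_set H)) (\<lambda>\<theta>. run H \<theta> st act T []))"
  by (simp add: mix_law_def law_def map_bind_pmf)

lemma main_bound:
  assumes H1: "1 \<le> H" and st: "\<forall>hs. 1 \<le> st hs \<and> st hs \<le> H"
    and d1: "(real H * real T * real T + 2 * real T) / 2^H \<le> 1"
  shows "\<bar>measure_pmf.prob (bind_pmf (pmf_of_set (Pib H b \<times> Phi_set H)) (\<lambda>\<theta>. run H \<theta> st act T [])) A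
          - measure_pmf.prob (runQ H st act T []) A\<bar>
        \<le> real (H + 1) * real T * real T / real (nobs H) + (real H * real T * real T + 2 * real T) / 2^H"
proof -
  let ?Q = "runQ H st act T []"
  let ?M = "bind_pmf (pmf_of_set (Pib H b \<times> Phi_set H)) (\<lambda>\<theta>. run H \<theta> st act T [])"
  let ?d = "(real H * real T * real T + 2 * real T) / 2^H"
  have d0: "0 \<le> ?d" by simp
  have T2: "real T \<le> 2^H"
  proof -
    have "2 * real T / 2^H \<le> ?d" by (intro divide_right_mono) auto
    then have "2 * real T / 2^H \<le> 1" using d1 by linarith
    then have "2 * real T \<le> 2^H" by (simp add: field_simps)
    then show ?thesis by linarith
  qed
  have low: "(1 - ?d) * pmf ?Q hs \<le> pmf ?M hs" if hs: "hs \<in> set_pmf ?Q" "\<not> \<not> dpts hs" for hs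
  proof -
    have stru: "\<forall>e\<in>set hs. struct H e" using runQ_struct[OF st hs(1)] by simp
    have len: "length hs = T" using runQ_prefix[OF hs(1)] by auto
    have r: "1 - ?d \<le> (\<Sum>\<theta>\<in>Pib H b \<times> Phi_set H. Rh H \<theta> hs) / real (card (Pib H b \<times> Phi_set H))"
      using mix_lower[OF H1 T2 stru _ len, of b] hs(2) by (simp add: add_divide_distrib)
    define \<rho> where "\<rho> = (\<Sum>\<theta>\<in>Pib H b \<times> Phi_set H. Rh H \<theta> hs) / real (card (Pib H b \<times> Phi_set H))"
    have e: "pmf ?M hs = pmf ?Q hs * \<rho>" unfolding \<rho>_def by (rule mix_pmf[OF H1 st])
    have "(1 - ?d) * pmf ?Q hs \<le> \<rho> * pmf ?Q hs" using r unfolding \<rho>_def by (rule mult_right_mono) simp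
    then show ?thesis using e by (simp add: mult.commute)
  qed
  have tv: "\<bar>measure_pmf.prob ?M A - measure_pmf.prob ?Q A\<bar> \<le> measure_pmf.prob ?Q {x. \<not> dpts x} + ?d"
    by (rule tv_two[OF low d0 d1]) auto
  have col: "measure_pmf.prob ?Q {x. \<not> dpts x} \<le> real (H + 1) * real T * real T / real (nobs H)"
    using run_col[OF st, of "[]" act T] Fc_bound[of H T] by simp
  show ?thesis using tv col by linarith
qed

theorem lemma12:
  fixes H T :: nat
    and st :: "episode list \<Rightarrow> nat"
    and act :: "episode list \<Rightarrow> step list \<Rightarrow> nat \<Rightarrow> bool"
    and out :: "episode list \<Rightarrow> bool list"
  assumes "1 \<le> H"
    and "\<forall>hs. 1 \<le> st hs \<and> st hs \<le> H"
    and "\<forall>hs. out hs \<in> Pi_set H"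
  shows "D_TV (mix_law H (Theta0 H) st act out T) (mix_law H (Theta1 H) st act out T)
           \<le> real T ^ 4 * real H / 2 powr (real H - 10)"
proof -
  note H1 = assms(1) and st = assms(2)
  let ?P0 = "mix_law H (Theta0 H) st act out T"
  let ?P1 = "mix_law H (Theta1 H) st act out T"
  let ?f = "\<lambda>hs. (hs, out hs)"
  let ?M = "\<lambda>b. bind_pmf (pmf_of_set (Pib H b \<times> Phi_set H)) (\<lambda>\<theta>. run H \<theta> st act T [])"
  let ?Q = "runQ H st act T []"
  let ?d = "(real H * real T * real T + 2 * real T) / 2^H"
  let ?R = "real T ^ 4 * real H / 2 powr (real H - 10)"
  have pw: "2 powr (real H - 10) = 2^H / 1024"
    by (simp add: powr_diff powr_realpow)
  have R: "?R = 1024 * real H * real T ^ 4 / 2^H" unfolding pw by (simp add: field_simps)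
  have P0: "?P0 = map_pmf ?f (?M False)" unfolding Theta0_eq by (rule mix_law_eq)
  have P1: "?P1 = map_pmf ?f (?M True)" unfolding Theta1_eq by (rule mix_law_eq)
  have bound: "\<bar>measure_pmf.prob ?P0 A - measure_pmf.prob ?P1 A\<bar> \<le> ?R" for A
  proof (cases "?d \<le> 1")
    case True
    let ?B = "?f -` A"
    have e0: "measure_pmf.prob ?P0 A = measure_pmf.prob (?M False) ?B" unfolding P0 by simp
    have e1: "measure_pmf.prob ?P1 A = measure_pmf.prob (?M True) ?B" unfolding P1 by simp
    have b0: "\<bar>measure_pmf.prob (?M False) ?B - measure_pmf.prob ?Q ?B\<bar> \<le> real (H + 1) * real T * real T / real (nobs H) + ?d"
      by (rule main_bound[OF H1 st True])
    have b1: "\<bar>measure_pmf.prob (?M True) ?B - measure_pmf.prob ?Q ?B\<bar> \<le> real (H + 1) * real T * real T / real (nobs H) + ?d"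
      by (rule main_bound[OF H1 st True])
    have "\<bar>measure_pmf.prob ?P0 A - measure_pmf.prob ?P1 A\<bar> \<le> 2 * (real (H + 1) * real T * real T / real (nobs H) + ?d)"
      unfolding e0 e1 by (rule abs2[OF b0 b1])
    also have "\<dots> \<le> ?R"
    proof -
      have m: "real (nobs H) = 4 * 2^H" by (simp add: nobs_def)
      have p0: "(0::real) < 2^H" by simp
      have "2 * (real (H + 1) * real T * real T / real (nobs H) + ?d)
          = ((real H + 1) * real T * real T / 2 + 2 * real H * real T * real T + 4 * real T) / 2^H"
        unfolding m by (simp add: field_simps)
      also have "\<dots> \<le> (1024 * real H * real T ^ 4) / 2^H"
      proof (rule divide_right_mono)
        have hT: "real T \<le> real T ^ 4" and hT2: "real T * real T \<le> real T ^ 4"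
        proof -
          show "real T * real T \<le> real T ^ 4"
          proof (cases "T = 0")
            case False
            then have t1: "(1::real) \<le> real T" by simp
            have "(1::real) * 1 \<le> real T * real T" by (rule mult_mono[OF t1 t1]) auto
            then have "(1::real) \<le> real T * real T" by simp
            then have "real T * real T * 1 \<le> real T * real T * (real T * real T)"
              by (intro mult_left_mono) auto
            then show ?thesis by (simp add: power4_eq_xxxx mult_ac)
          qed simp
          show "real T \<le> real T ^ 4"
          proof (cases "T = 0")
            case False
            then have "(1::real) \<le> real T" by simp
            then have "real T * 1 \<le> real T * real T" by (intro mult_left_mono) auto
            then show ?thesis using \<open>real T * real T \<le> real T ^ 4\<close> by linarith
          qed simp
        qed
        have h1: "(1::real) \<le> real H" using H1 by simp
        have a1: "(real H + 1) * real T * real T / 2 \<le> real H * (real T * real T)"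
        proof -
          have "1 * (real T * real T) \<le> real H * (real T * real T)" using h1 by (intro mult_right_mono) auto
          then show ?thesis by (simp add: field_simps)
        qed
        have a2: "real H * (real T * real T) \<le> real H * real T ^ 4" using hT2 h1 by (simp add: mult_left_mono)
        have a3: "real T \<le> real H * real T ^ 4"
        proof -
          have "real T ^ 4 * 1 \<le> real T ^ 4 * real H" using h1 by (intro mult_left_mono) auto
          then have "real T ^ 4 \<le> real H * real T ^ 4" by (simp add: mult.commute)
          then show ?thesis using hT by linarith
        qed
        show "(real H + 1) * real T * real T / 2 + 2 * real H * real T * real T + 4 * real T \<le> 1024 * real H * real T ^ 4"
        proof -
          have a4: "2 * real H * real T * real T = 2 * (real H * (real T * real T))" by simp
          show ?thesis using a1 a2 a3 a4 by linarith
        qed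
      qed (use p0 in simp)
      finally show ?thesis using R by simp
    qed
    finally show ?thesis .
  next
    case False
    have one: "\<bar>measure_pmf.prob ?P0 A - measure_pmf.prob ?P1 A\<bar> \<le> 1"
      using measure_pmf.prob_le_1[of ?P0 A] measure_pmf.prob_le_1[of ?P1 A]
        measure_nonneg[of ?P0 A] measure_nonneg[of ?P1 A] by linarith
    have "1 \<le> ?R"
    proof -
      have p0: "(0::real) < 2^H" by simp
      have "(2::real)^H < real H * real T * real T + 2 * real T" using False p0 by (simp add: field_simps)
      also have "\<dots> \<le> 1024 * real H * real T ^ 4"
      proof (cases "T = 0")
        case False
        have h1: "(1::real) \<le> real H" using H1 by simp
        have t1: "(1::real) \<le> real T" using False by simp
        have tt: "1 \<le> real T * real T" using mult_mono[OF t1 t1] by simp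
        have t4: "real T * real T \<le> real T ^ 4"
        proof -
          have "real T * real T * 1 \<le> real T * real T * (real T * real T)"
            using tt by (intro mult_left_mono) auto
          then show ?thesis by (simp add: power4_eq_xxxx mult_ac)
        qed
        have t2: "real T \<le> real T * real T"
        proof -
          have "real T * 1 \<le> real T * real T" using t1 by (intro mult_left_mono) auto
          then show ?thesis by simp
        qed
        have hh: "real T ^ 4 \<le> real H * real T ^ 4"
        proof -
          have "1 * real T ^ 4 \<le> real H * real T ^ 4" using h1 by (intro mult_right_mono) auto
          then show ?thesis by simp
        qed
        have b1: "real H * (real T * real T) \<le> real H * real T ^ 4"
          using t4 h1 by (intro mult_left_mono) auto
        have b0: "real H * real T * real T = real H * (real T * real T)" by (simp add: mult.assoc)
        have "0 \<le> real H * real T ^ 4" by simp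
        then show ?thesis using b0 b1 t2 t4 hh by linarith
      qed simp
      finally have "(2::real)^H \<le> 1024 * real H * real T ^ 4" by simp
      then show ?thesis unfolding R using p0 by (simp add: field_simps)
    qed
    then show ?thesis using one by linarith
  qed
  show ?thesis unfolding D_TV_def by (rule cSUP_least) (auto intro: bound)
qed

end
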